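(* For $1\le j\le n$ and $0\le r\le n-j$ set $p^{(r)}_j=(-1)^rx_n^r\,e_{n-j-r}(x_1,\dots,x_{n-1})$. Then $p^{(r)}_j\in\mathcal P_n^{S_{n-1}\times S_1}$ and $\partial_{c[j]}(p^{(r)}_j)=1$. Consequently, for any choice of $r_j\in\{0,\dots,n-j\}$ for each $j$, the elements $\omega^{(r_j)}_j=\sum_{k\ge j}\partial_{c[k]}(p^{(r_j)}_j)\,\omega_k$ lie in $\Lambda^\omega_n$ and multiplication gives a ring isomorphism $\Lambda_n\otimes\bigwedge[\omega^{(r_1)}_1,\dots,\omega^{(r_n)}_n]\cong\Lambda^\omega_n$. Moreover $p^{(0)}_j=e_{n-j}(x_1,\dots,x_{n-1})$ and $p^{(n-j)}_j=(-1)^{n-j}h_{n-j}(x_n)=(-1)^{n-j}x_n^{n-j}$.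
   Context: $\mathcal P_n=\mathbb Q[x_1,\dots,x_n]$, $\Lambda_n=\mathcal P_n^{S_n}$, $\mathcal P^\omega_n=\mathcal P_n\otimes\bigwedge[\omega_1,\dots,\omega_n]$ ($\omega_i$ odd), $S_n$ acting by ring automorphisms via $s_i(x_j)=x_{s_i(j)}$, $s_i(\omega_j)=\omega_j+\delta_{ij}(x_j-x_{j+1})\omega_{j+1}$; $\Lambda^\omega_n=(\mathcal P^\omega_n)^{S_n}$. $\partial_i=(1-s_i)/(x_i-x_{i+1})$; $c[j]=s_j\cdots s_{n-1}$ ($c[n]=\mathrm{id}$), $\partial_{c[j]}=\partial_j\partial_{j+1}\cdots\partial_{n-1}$. $e_m$, $h_m$: elementary and complete homogeneous symmetric polynomials. $\mathcal P_n^{S_{n-1}\times S_1}$: polynomials symmetric in $x_1,\dots,x_{n-1}$. *)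

theory Defs
  imports Complex_Main "HOL-Library.Poly_Mapping"
begin

text \<open>Multivariate polynomials with rational coefficients: finitely supported maps from
  monomials (exponent vectors nat =>0 nat, variable x_i has index i) to rat.\<close>
type_synonym mpoly = "(nat \<Rightarrow>\<^sub>0 nat) \<Rightarrow>\<^sub>0 rat"

definition X :: "nat \<Rightarrow> mpoly" where
  "X i = Poly_Mapping.single (Poly_Mapping.single i 1) 1"

definition monom :: "(nat \<Rightarrow>\<^sub>0 nat) \<Rightarrow> mpoly" where
  "monom \<alpha> = Poly_Mapping.single \<alpha> 1"

definition Pn :: "nat \<Rightarrow> mpoly set" where
  "Pn n = {p. \<forall>\<alpha>\<in>Poly_Mapping.keys p. Poly_Mapping.keys \<alpha> \<subseteq> {1..n}}"

definition tr :: "nat \<Rightarrow> nat \<Rightarrow> nat" where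
  "tr i k = (if k = i then i + 1 else if k = i + 1 then i else k)"

text \<open>s_i acting on polynomials: s_i(x_j) = x_{s_i(j)}, extended as ring automorphism,
  i.e. (s_i p)(alpha) = p(alpha o s_i) on coefficients.\<close>
definition swp :: "nat \<Rightarrow> mpoly \<Rightarrow> mpoly" where
  "swp i p = Poly_Mapping.map_key (\<lambda>\<alpha>. Poly_Mapping.map_key (tr i) \<alpha>) p"

text \<open>Divided difference operator: the exact quotient (f - s_i f)/(x_i - x_{i+1}).\<close>
definition dd :: "nat \<Rightarrow> mpoly \<Rightarrow> mpoly" where
  "dd i f = (THE g. (X i - X (i + 1)) * g = f - swp i f)"

text \<open>partial_{c[k]} = partial_k partial_{k+1} ... partial_{n-1}  (identity for k = n)\<close>
definition dc :: "nat \<Rightarrow> nat \<Rightarrow> mpoly \<Rightarrow> mpoly" where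
  "dc n k f = foldr dd [k..<n] f"

definition elem :: "nat set \<Rightarrow> nat \<Rightarrow> mpoly" where
  "elem A m = (\<Sum>T\<in>{T. T \<subseteq> A \<and> card T = m}. \<Prod>i\<in>T. X i)"

definition hcompl :: "nat set \<Rightarrow> nat \<Rightarrow> mpoly" where
  "hcompl A m = (\<Sum>\<alpha>\<in>{\<alpha>. Poly_Mapping.keys \<alpha> \<subseteq> A \<and> (\<Sum>i\<in>A. Poly_Mapping.lookup \<alpha> i) = m}. monom \<alpha>)"

definition Lam :: "nat \<Rightarrow> mpoly set" where
  "Lam n = {p \<in> Pn n. \<forall>i\<in>{1..<n}. swp i p = p}"

definition Pn1 :: "nat \<Rightarrow> mpoly set" where
  "Pn1 n = {p \<in> Pn n. \<forall>i\<in>{1..<n-1}. swp i p = p}"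

text \<open>An element is a coefficient function on subsets S of {1..n}; a(S) is the coefficient
  of omega_S = omega_{s_1} ... omega_{s_k} (s_1 < ... < s_k).\<close>
type_synonym ext = "nat set \<Rightarrow> mpoly"

definition ext_carrier :: "nat \<Rightarrow> ext set" where
  "ext_carrier n = {a. (\<forall>S. a S \<noteq> 0 \<longrightarrow> S \<subseteq> {1..n}) \<and> (\<forall>S. a S \<in> Pn n)}"

definition ext_add :: "ext \<Rightarrow> ext \<Rightarrow> ext" where
  "ext_add a b = (\<lambda>S. a S + b S)"

text \<open>sign of omega_T omega_U = sgn * omega_{T \<union> U} for disjoint T, U\<close>
definition esgn :: "nat set \<Rightarrow> nat set \<Rightarrow> mpoly" where
  "esgn T U = (-1) ^ card {(t, u). t \<in> T \<and> u \<in> U \<and> u < t}"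

definition ext_mul :: "ext \<Rightarrow> ext \<Rightarrow> ext" where
  "ext_mul a b = (\<lambda>S. \<Sum>T\<in>Pow S. esgn T (S - T) * a T * b (S - T))"

definition ext_one :: ext where
  "ext_one = (\<lambda>S. if S = {} then 1 else 0)"

definition ext_scal :: "mpoly \<Rightarrow> ext" where
  "ext_scal f = (\<lambda>S. if S = {} then f else 0)"

definition omega :: "nat \<Rightarrow> ext" where
  "omega k = (\<lambda>S. if S = {k} then 1 else 0)"

definition ext_sum :: "('i \<Rightarrow> ext) \<Rightarrow> 'i set \<Rightarrow> ext" where
  "ext_sum g A = (\<lambda>S. \<Sum>x\<in>A. g x S)"

definition ext_prodlist :: "ext list \<Rightarrow> ext" where
  "ext_prodlist xs = foldr ext_mul xs ext_one"

definition act_gen :: "nat \<Rightarrow> nat \<Rightarrow> ext" where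
  "act_gen i j = (if j = i then ext_add (omega j) (ext_mul (ext_scal (X j - X (j + 1))) (omega (j + 1)))
                  else omega j)"

definition act :: "nat \<Rightarrow> nat \<Rightarrow> ext \<Rightarrow> ext" where
  "act n i a = ext_sum (\<lambda>S. ext_mul (ext_scal (swp i (a S)))
                 (ext_prodlist (map (act_gen i) (sorted_list_of_set S)))) (Pow {1..n})"

text \<open>Lambda^omega_n: S_n-invariants (S_n is generated by s_1, ..., s_{n-1}).\<close>
definition LamOm :: "nat \<Rightarrow> ext set" where
  "LamOm n = {a \<in> ext_carrier n. \<forall>i\<in>{1..<n}. act n i a = a}"

definition pjr :: "nat \<Rightarrow> nat \<Rightarrow> nat \<Rightarrow> mpoly" where
  "pjr n j r = (-1) ^ r * X n ^ r * elem {1..<n} (n - j - r)"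

definition omr :: "nat \<Rightarrow> nat \<Rightarrow> nat \<Rightarrow> ext" where
  "omr n j r = ext_sum (\<lambda>k. ext_mul (ext_scal (dc n k (pjr n j r))) (omega k)) {j..n}"

text \<open>Lambda_n \<otimes> exterior algebra on n odd generators: the exterior algebra over Lambda_n,
  i.e. elements of P^omega_n whose coefficients are symmetric, with the same product.\<close>
definition tens_carrier :: "nat \<Rightarrow> ext set" where
  "tens_carrier n = {f \<in> ext_carrier n. \<forall>S. f S \<in> Lam n}"

definition Phi :: "nat \<Rightarrow> (nat \<Rightarrow> nat) \<Rightarrow> ext \<Rightarrow> ext" where
  "Phi n r f = ext_sum (\<lambda>S. ext_mul (ext_scal (f S))
                 (ext_prodlist (map (\<lambda>j. omr n j (r j)) (sorted_list_of_set S)))) (Pow {1..n})"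

end

theory Submission imports Defs begin


abbreviation PM_lookup where "PM_lookup \<equiv> Poly_Mapping.lookup"
abbreviation PM_single where "PM_single \<equiv> Poly_Mapping.single"
abbreviation PM_keys where "PM_keys \<equiv> Poly_Mapping.keys"

lemma tr_tr[simp]: "tr i (tr i k) = k"
  by (simp add: tr_def)

lemma inj_tr[simp]: "inj (tr i)"
  by (metis injI tr_tr)

definition sg :: "nat \<Rightarrow> (nat \<Rightarrow>\<^sub>0 nat) \<Rightarrow> (nat \<Rightarrow>\<^sub>0 nat)" where
  "sg i \<alpha> = Poly_Mapping.map_key (tr i) \<alpha>"

lemma lookup_sg: "PM_lookup (sg i \<alpha>) k = PM_lookup \<alpha> (tr i k)"
  by (simp add: sg_def map_key.rep_eq)

lemma sg_sg[simp]: "sg i (sg i \<alpha>) = \<alpha>"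
  by (rule poly_mapping_eqI) (simp add: lookup_sg)

lemma inj_sg[simp]: "inj (sg i)"
  by (metis injI sg_sg)

lemma sg_add: "sg i (\<alpha> + \<beta>) = sg i \<alpha> + sg i \<beta>"
  by (rule poly_mapping_eqI) (simp add: lookup_sg lookup_add)

lemma sg_single: "sg i (PM_single k e) = PM_single (tr i k) e"
  by (rule poly_mapping_eqI) (simp add: lookup_sg lookup_single when_def, metis tr_tr)

lemma swp_sg: "swp i p = Poly_Mapping.map_key (sg i) p"
  by (simp add: swp_def sg_def[abs_def])

lemma lookup_swp: "PM_lookup (swp i p) \<alpha> = PM_lookup p (sg i \<alpha>)"
  by (simp add: swp_sg map_key.rep_eq)

lemma swp_add: "swp i (p + q) = swp i p + swp i q"
  by (rule poly_mapping_eqI) (simp add: lookup_swp lookup_add)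

lemma swp_minus: "swp i (- p) = - swp i p"
  by (rule poly_mapping_eqI) (simp add: lookup_swp)

lemma swp_diff: "swp i (p - q) = swp i p - swp i q"
  by (rule poly_mapping_eqI) (simp add: lookup_swp lookup_minus)

lemma swp_zero[simp]: "swp i 0 = 0"
  by (rule poly_mapping_eqI) (simp add: lookup_swp)

lemma swp_swp[simp]: "swp i (swp i p) = p"
  by (rule poly_mapping_eqI) (simp add: lookup_swp)

lemma swp_single: "swp i (PM_single \<alpha> c) = PM_single (sg i \<alpha>) c"
  by (rule poly_mapping_eqI) (simp add: lookup_swp lookup_single when_def, metis sg_sg)

lemma swp_sum: "swp i (sum f A) = (\<Sum>a\<in>A. swp i (f a))"
  by (induction A rule: infinite_finite_induct) (simp_all add: swp_add)

lemma pm_expand: "(p :: 'a \<Rightarrow>\<^sub>0 'b::comm_monoid_add) = (\<Sum>\<alpha>\<in>PM_keys p. PM_single \<alpha> (PM_lookup p \<alpha>))"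
proof (rule poly_mapping_eqI)
  fix k
  have "PM_lookup (\<Sum>\<alpha>\<in>PM_keys p. PM_single \<alpha> (PM_lookup p \<alpha>)) k
      = (\<Sum>\<alpha>\<in>PM_keys p. (PM_lookup p \<alpha> when \<alpha> = k))"
    by (simp add: lookup_sum lookup_single)
  also have "\<dots> = PM_lookup p k"
    by (cases "k \<in> PM_keys p") (simp_all add: when_def in_keys_iff)
  finally show "PM_lookup p k = PM_lookup (\<Sum>\<alpha>\<in>PM_keys p. PM_single \<alpha> (PM_lookup p \<alpha>)) k" by simp
qed

lemma mult_expand: "(p::mpoly) * q = (\<Sum>\<alpha>\<in>PM_keys p. \<Sum>\<beta>\<in>PM_keys q. PM_single (\<alpha>+\<beta>) (PM_lookup p \<alpha> * PM_lookup q \<beta>))"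
proof -
  have "p * q = (\<Sum>\<alpha>\<in>PM_keys p. PM_single \<alpha> (PM_lookup p \<alpha>)) * (\<Sum>\<beta>\<in>PM_keys q. PM_single \<beta> (PM_lookup q \<beta>))"
    using pm_expand[of p] pm_expand[of q] by simp
  also have "\<dots> = (\<Sum>\<alpha>\<in>PM_keys p. \<Sum>\<beta>\<in>PM_keys q. PM_single \<alpha> (PM_lookup p \<alpha>) * PM_single \<beta> (PM_lookup q \<beta>))"
    by (simp add: sum_distrib_left sum_distrib_right) (rule sum.swap)
  finally show ?thesis by (simp add: mult_single)
qed

lemma swp_mult: "swp i (p * q) = swp i p * swp i q"
proof -
  have "swp i (p * q) = (\<Sum>\<alpha>\<in>PM_keys p. \<Sum>\<beta>\<in>PM_keys q. PM_single (sg i \<alpha> + sg i \<beta>) (PM_lookup p \<alpha> * PM_lookup q \<beta>))"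
    by (subst mult_expand) (simp add: swp_sum swp_single sg_add)
  also have "\<dots> = (\<Sum>\<alpha>\<in>PM_keys p. PM_single (sg i \<alpha>) (PM_lookup p \<alpha>)) * (\<Sum>\<beta>\<in>PM_keys q. PM_single (sg i \<beta>) (PM_lookup q \<beta>))"
    by (simp add: sum_distrib_left sum_distrib_right mult_single) (rule sum.swap)
  also have "\<dots> = swp i p * swp i q"
    by (subst (3) pm_expand, subst (4) pm_expand) (simp add: swp_sum swp_single)
  finally show ?thesis .
qed

lemma sg_zero[simp]: "sg i 0 = 0"
  by (rule poly_mapping_eqI) (simp add: lookup_sg)

lemma swp_const[simp]: "swp i (PM_single 0 c) = PM_single 0 c"
  by (simp add: swp_single)

lemma swp_one[simp]: "swp i 1 = 1"
  using swp_const[of i 1] by simp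

lemma swp_X: "swp i (X k) = X (tr i k)"
  by (simp add: X_def swp_single sg_single)

lemma swp_power: "swp i (p ^ m) = swp i p ^ m"
  by (induction m) (simp_all add: swp_mult)

lemma swp_prod: "swp i (prod f A) = (\<Prod>a\<in>A. swp i (f a))"
  by (induction A rule: infinite_finite_induct) (simp_all add: swp_mult)

lemma swp_neg1_pow[simp]: "swp i ((-1) ^ m) = (-1) ^ m"
  by (simp add: swp_power swp_minus)

lemma swp_numeral_neg[simp]: "swp i (-1) = -1"
  by (simp add: swp_minus)

definition VV :: "nat set \<Rightarrow> mpoly set" where
  "VV A = {p. \<forall>\<alpha>\<in>PM_keys p. PM_keys \<alpha> \<subseteq> A}"

lemma Pn_V: "Pn n = VV {1..n}"
  by (simp add: Pn_def VV_def)

lemma V_add: "p \<in> VV A \<Longrightarrow> q \<in> VV A \<Longrightarrow> p + q \<in> VV A"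
proof -
  assume a: "p \<in> VV A" "q \<in> VV A"
  show ?thesis unfolding VV_def mem_Collect_eq
  proof
    fix \<gamma> assume "\<gamma> \<in> PM_keys (p + q)"
    then have "\<gamma> \<in> PM_keys p \<or> \<gamma> \<in> PM_keys q" using keys_add[of p q] by auto
    then show "PM_keys \<gamma> \<subseteq> A" using a unfolding VV_def by auto
  qed
qed

lemma V_minus: "p \<in> VV A \<Longrightarrow> - p \<in> VV A"
  unfolding VV_def by simp

lemma V_diff: "p \<in> VV A \<Longrightarrow> q \<in> VV A \<Longrightarrow> p - q \<in> VV A"
  unfolding diff_conv_add_uminus by (intro V_add V_minus)

lemma V_zero[simp]: "0 \<in> VV A"
  unfolding VV_def by simp

lemma V_const[simp]: "PM_single 0 c \<in> VV A"
  unfolding VV_def by simp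

lemma V_one[simp]: "1 \<in> VV A"
  using V_const[of 1] by simp

lemma keys_add_pm: "PM_keys ((\<alpha>::nat \<Rightarrow>\<^sub>0 nat) + \<beta>) = PM_keys \<alpha> \<union> PM_keys \<beta>"
  by (rule set_eqI) (simp add: in_keys_iff lookup_add)

lemma V_mult: "p \<in> VV A \<Longrightarrow> q \<in> VV A \<Longrightarrow> p * q \<in> VV A"
proof -
  assume a: "p \<in> VV A" "q \<in> VV A"
  show ?thesis unfolding VV_def mem_Collect_eq
  proof
    fix \<gamma> assume "\<gamma> \<in> PM_keys (p * q)"
    then obtain a b where "\<gamma> = a + b" "a \<in> PM_keys p" "b \<in> PM_keys q"
      using keys_mult[of p q] by blast
    then show "PM_keys \<gamma> \<subseteq> A" using a unfolding VV_def by (auto simp: keys_add_pm)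
  qed
qed

lemma V_X: "k \<in> A \<Longrightarrow> X k \<in> VV A"
  unfolding VV_def X_def by simp

lemma V_sum: "(\<And>a. a \<in> B \<Longrightarrow> f a \<in> VV A) \<Longrightarrow> sum f B \<in> VV A"
  by (induction B rule: infinite_finite_induct) (simp_all add: V_add)

lemma V_prod: "(\<And>a. a \<in> B \<Longrightarrow> f a \<in> VV A) \<Longrightarrow> prod f B \<in> VV A"
  by (induction B rule: infinite_finite_induct) (simp_all add: V_mult)

lemma V_power: "p \<in> VV A \<Longrightarrow> p ^ m \<in> VV A"
  by (induction m) (simp_all add: V_mult)

lemma V_neg1_pow[simp]: "(-1) ^ m \<in> VV A"
  by (intro V_power V_minus V_one)

lemma V_mono: "p \<in> VV A \<Longrightarrow> A \<subseteq> B \<Longrightarrow> p \<in> VV B"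
  unfolding VV_def by blast

lemma V_UNIV[simp]: "p \<in> VV UNIV"
  unfolding VV_def by simp

lemma X_power: "X k ^ e = PM_single (PM_single k e) 1"
proof (induction e)
  case 0 then show ?case by simp
next
  case (Suc e)
  then show ?case by (simp add: X_def mult_single single_add[symmetric] add.commute)
qed

lemma monom_prod: "finite K \<Longrightarrow> (\<Prod>k\<in>K. X k ^ f k) = PM_single (\<Sum>k\<in>K. PM_single k (f k)) 1"
  by (induction K rule: finite_induct) (simp_all add: X_power mult_single)

lemma mpoly_induct_V[consumes 1, case_names add mult const var]:
  assumes p: "p \<in> VV A"
    and add: "\<And>p q. P p \<Longrightarrow> P q \<Longrightarrow> P (p + q)"
    and mult: "\<And>p q. P p \<Longrightarrow> P q \<Longrightarrow> P (p * q)"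
    and const: "\<And>c. P (PM_single 0 c)"
    and var: "\<And>k. k \<in> A \<Longrightarrow> P (X k)"
  shows "P p"
proof -
  have P0: "P 0" using const[of 0] by simp
  have P1: "P 1" using const[of 1] by simp
  have Psum: "\<And>f B. (\<And>b. b \<in> B \<Longrightarrow> P (f b)) \<Longrightarrow> P (sum f B)"
  proof -
    fix f B show "(\<And>b. b \<in> B \<Longrightarrow> P (f b)) \<Longrightarrow> P (sum f B)"
      by (induction B rule: infinite_finite_induct) (simp_all add: P0 add)
  qed
  have Pprod: "\<And>f B. (\<And>b. b \<in> B \<Longrightarrow> P (f b)) \<Longrightarrow> P (prod f B)"
  proof -
    fix f B show "(\<And>b. b \<in> B \<Longrightarrow> P (f b)) \<Longrightarrow> P (prod f B)"
      by (induction B rule: infinite_finite_induct) (simp_all add: P1 mult)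
  qed
  have Ppow: "\<And>q m. P q \<Longrightarrow> P (q ^ m)"
  proof -
    fix q :: mpoly and m show "P q \<Longrightarrow> P (q ^ m)"
      by (induction m) (simp_all add: P1 mult)
  qed
  have mono: "P (PM_single \<alpha> c)" if "PM_keys \<alpha> \<subseteq> A" for \<alpha> c
  proof -
    have "PM_single \<alpha> (1::rat) = (\<Prod>k\<in>PM_keys \<alpha>. X k ^ PM_lookup \<alpha> k)"
      by (subst monom_prod) (simp_all, metis pm_expand)
    moreover have "P (\<Prod>k\<in>PM_keys \<alpha>. X k ^ PM_lookup \<alpha> k)"
      using that by (intro Pprod Ppow var) auto
    ultimately have "P (PM_single \<alpha> 1)" by simp
    then have "P (PM_single 0 c * PM_single \<alpha> 1)" by (intro mult const)
    then show ?thesis by (simp add: mult_single)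
  qed
  have "P (\<Sum>\<alpha>\<in>PM_keys p. PM_single \<alpha> (PM_lookup p \<alpha>))"
    using p by (intro Psum mono) (auto simp: VV_def)
  then show ?thesis by (metis pm_expand)
qed




lemma keys_sg: "PM_keys (sg i \<alpha>) = tr i ` PM_keys \<alpha>"
proof (rule set_eqI)
  fix k show "k \<in> PM_keys (sg i \<alpha>) \<longleftrightarrow> k \<in> tr i ` PM_keys \<alpha>"
  proof
    assume "k \<in> PM_keys (sg i \<alpha>)"
    then have "tr i k \<in> PM_keys \<alpha>" by (simp add: in_keys_iff lookup_sg)
    then show "k \<in> tr i ` PM_keys \<alpha>" using image_eqI[of k "tr i" "tr i k"] by simp
  next
    assume "k \<in> tr i ` PM_keys \<alpha>"
    then obtain l where "l \<in> PM_keys \<alpha>" "k = tr i l" by blast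
    then show "k \<in> PM_keys (sg i \<alpha>)" by (simp add: in_keys_iff lookup_sg)
  qed
qed

lemma tr_mem: "i \<in> A \<Longrightarrow> Suc i \<in> A \<Longrightarrow> k \<in> A \<Longrightarrow> tr i k \<in> A"
  by (simp add: tr_def)

lemma swp_V: assumes "f \<in> VV A" "i \<in> A" "Suc i \<in> A" shows "swp i f \<in> VV A"
  unfolding VV_def mem_Collect_eq
proof
  fix \<alpha> assume "\<alpha> \<in> PM_keys (swp i f)"
  then have "sg i \<alpha> \<in> PM_keys f" by (simp add: in_keys_iff lookup_swp)
  then have "PM_keys (sg i \<alpha>) \<subseteq> A" using assms(1) unfolding VV_def by blast
  then have "tr i ` PM_keys \<alpha> \<subseteq> A" by (simp only: keys_sg)
  show "PM_keys \<alpha> \<subseteq> A"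
  proof
    fix k assume "k \<in> PM_keys \<alpha>"
    then have "tr i k \<in> A" using \<open>tr i ` PM_keys \<alpha> \<subseteq> A\<close> by blast
    then have "tr i (tr i k) \<in> A" using assms(2,3) by (rule tr_mem[rotated 2])
    then show "k \<in> A" by simp
  qed
qed

lemma X_inj: "X i = X j \<longleftrightarrow> i = j"
proof
  assume "X i = X j"
  then have "PM_lookup (X i) (PM_single i 1) = PM_lookup (X j) (PM_single i 1)" by simp
  then have "PM_single i (1::nat) = PM_single j 1" unfolding X_def
    by (simp add: lookup_single when_def split: if_splits)
  then have "PM_lookup (PM_single i (1::nat)) i = PM_lookup (PM_single j 1) i" by simp
  then show "i = j" by (simp add: lookup_single when_def split: if_splits)
qed simp

lemma Xd_nz: "X i - X (i + 1) \<noteq> 0"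
  using X_inj[of i "i+1"] by simp

lemma dd_exists:
  assumes "f \<in> VV A" "i \<in> A" "Suc i \<in> A"
  shows "\<exists>g\<in>VV A. (X i - X (i + 1)) * g = f - swp i f"
proof -
  have "f \<in> VV A \<and> (\<exists>g\<in>VV A. (X i - X (i + 1)) * g = f - swp i f)"
    using assms(1)
  proof (induction f rule: mpoly_induct_V)
    case (add p q)
    then obtain g h where gh: "g \<in> VV A" "h \<in> VV A" "(X i - X (i + 1)) * g = p - swp i p" "(X i - X (i + 1)) * h = q - swp i q"
      by blast
    then have "(X i - X (i + 1)) * (g + h) = (p + q) - swp i (p + q)"
      by (simp add: algebra_simps swp_add)
    then show ?case using add gh by (metis V_add)
  next
    case (mult p q)
    then obtain g h where gh: "g \<in> VV A" "h \<in> VV A" "(X i - X (i + 1)) * g = p - swp i p" "(X i - X (i + 1)) * h = q - swp i q"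
      by blast
    have "(X i - X (i + 1)) * (g * q + swp i p * h) = ((X i - X (i + 1)) * g) * q + swp i p * ((X i - X (i + 1)) * h)"
      by (simp only: algebra_simps)
    also have "\<dots> = (p * q) - swp i (p * q)"
      unfolding gh(3) gh(4) swp_mult by (simp only: algebra_simps)
    finally have "(X i - X (i + 1)) * (g * q + swp i p * h) = (p * q) - swp i (p * q)" .
    moreover have "g * q + swp i p * h \<in> VV A"
      using gh mult assms by (intro V_add V_mult swp_V) auto
    ultimately show ?case using mult by (metis V_mult)
  next
    case (const c)
    then show ?case by (intro conjI bexI[of _ 0]) auto
  next
    case (var k)
    show ?case
    proof (cases "k = i \<or> k = Suc i")
      case True
      then show ?thesis
      proof
        assume "k = i"
        then show ?thesis using var assms by (intro conjI V_X bexI[of _ 1]) (auto simp: swp_X tr_def)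
      next
        assume "k = Suc i"
        then show ?thesis using var assms by (intro conjI V_X bexI[of _ "-1"]) (auto simp: swp_X tr_def V_minus)
      qed
    next
      case False
      then show ?thesis using var by (intro conjI V_X bexI[of _ 0]) (auto simp: swp_X tr_def)
    qed
  qed
  then show ?thesis by blast
qed

lemma dd_char:
  assumes "(X i - X (i + 1)) * g = f - swp i f"
  shows "dd i f = g"
  unfolding dd_def
proof (rule the_equality)
  fix h assume "(X i - X (i + 1)) * h = f - swp i f"
  then have "(X i - X (i + 1)) * h = (X i - X (i + 1)) * g" using assms by simp
  then show "h = g" using Xd_nz by simp
qed (rule assms)

lemma dd_spec: "(X i - X (i + 1)) * dd i f = f - swp i f"
proof -
  obtain g where "(X i - X (i + 1)) * g = f - swp i f"
    using dd_exists[of f UNIV i] by auto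
  then show ?thesis using dd_char by simp
qed

lemma dd_V: "f \<in> VV A \<Longrightarrow> i \<in> A \<Longrightarrow> Suc i \<in> A \<Longrightarrow> dd i f \<in> VV A"
  using dd_exists[of f A i] dd_char by metis

lemma dd_add: "dd i (f + g) = dd i f + dd i g"
  by (rule dd_char) (simp only: distrib_left dd_spec swp_add, simp add: algebra_simps)

lemma dd_diff: "dd i (f - g) = dd i f - dd i g"
  by (rule dd_char) (simp only: right_diff_distrib dd_spec swp_diff, simp add: algebra_simps)

lemma dd_symmult: "swp i g = g \<Longrightarrow> dd i (g * f) = g * dd i f"
proof -
  assume a: "swp i g = g"
  have "(X i - X (i + 1)) * (g * dd i f) = g * ((X i - X (i + 1)) * dd i f)" by (simp only: ac_simps)
  also have "\<dots> = g * f - swp i (g * f)" by (simp only: dd_spec swp_mult a right_diff_distrib)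
  finally show ?thesis by (rule dd_char)
qed

lemma dd_sym: "swp i f = f \<Longrightarrow> dd i f = 0"
  by (rule dd_char) simp

lemma dd_X: "dd i (X i) = 1"
  by (rule dd_char) (simp add: swp_X tr_def)

lemma swp_dd: "swp i (dd i f) = dd i f"
proof -
  have "(X i - X (i + 1)) * swp i (dd i f) = - swp i ((X i - X (i + 1)) * dd i f)"
    by (simp add: swp_mult swp_diff swp_X tr_def algebra_simps)
  also have "\<dots> = (X i - X (i + 1)) * dd i f"
    by (simp only: dd_spec swp_diff swp_swp, simp)
  finally show ?thesis using Xd_nz by simp
qed

lemma dc_n[simp]: "dc n n f = f"
  by (simp add: dc_def)

lemma dc_step: "k < n \<Longrightarrow> dc n k f = dd k (dc n (Suc k) f)"
  by (simp add: dc_def upt_rec)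

lemma foldr_dd_add: "foldr dd L (f + g) = foldr dd L f + foldr dd L g"
  by (induction L) (simp_all add: dd_add)

lemma foldr_dd_diff: "foldr dd L (f - g) = foldr dd L f - foldr dd L g"
  by (induction L) (simp_all add: dd_diff)

lemma foldr_dd_symmult: "(\<forall>i\<in>set L. swp i g = g) \<Longrightarrow> foldr dd L (g * f) = g * foldr dd L f"
  by (induction L) (simp_all add: dd_symmult)

lemma dc_add: "dc n k (f + g) = dc n k f + dc n k g"
  by (simp add: dc_def foldr_dd_add)

lemma dc_diff: "dc n k (f - g) = dc n k f - dc n k g"
  by (simp add: dc_def foldr_dd_diff)

lemma dc_symmult: "(\<forall>i\<in>{k..<n}. swp i g = g) \<Longrightarrow> dc n k (g * f) = g * dc n k f"
  unfolding dc_def by (rule foldr_dd_symmult) simp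

lemma foldr_dd_V: "(\<forall>i\<in>set L. i \<in> A \<and> Suc i \<in> A) \<Longrightarrow> f \<in> VV A \<Longrightarrow> foldr dd L f \<in> VV A"
  by (induction L) (simp_all add: dd_V)

lemma dc_V: "1 \<le> k \<Longrightarrow> f \<in> VV {1..n} \<Longrightarrow> dc n k f \<in> VV {1..n}"
  unfolding dc_def by (rule foldr_dd_V) auto

lemma elem_0: "finite A \<Longrightarrow> elem A 0 = 1"
proof -
  assume "finite A"
  then have "{T. T \<subseteq> A \<and> card T = 0} = {{}}" by (auto dest: finite_subset)
  then show ?thesis by (simp add: elem_def)
qed

lemma elem_insert:
  assumes fin: "finite A" and a: "a \<notin> A"
  shows "elem (insert a A) (Suc t) = elem A (Suc t) + X a * elem A t"
proof -
  have split: "{T. T \<subseteq> insert a A \<and> card T = Suc t} = {T. T \<subseteq> A \<and> card T = Suc t} \<union> insert a ` {T. T \<subseteq> A \<and> card T = t}"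
  proof (rule set_eqI, rule iffI)
    fix T assume T: "T \<in> {T. T \<subseteq> insert a A \<and> card T = Suc t}"
    show "T \<in> {T. T \<subseteq> A \<and> card T = Suc t} \<union> insert a ` {T. T \<subseteq> A \<and> card T = t}"
    proof (cases "a \<in> T")
      case True
      have "finite T" using T fin by (auto intro: finite_subset)
      then have "T = insert a (T - {a})" "T - {a} \<subseteq> A" "card (T - {a}) = t"
        using True T by auto
      then show ?thesis by blast
    next
      case False then show ?thesis using T by auto
    qed
  next
    fix T assume "T \<in> {T. T \<subseteq> A \<and> card T = Suc t} \<union> insert a ` {T. T \<subseteq> A \<and> card T = t}"
    then show "T \<in> {T. T \<subseteq> insert a A \<and> card T = Suc t}"
    proof
      assume "T \<in> insert a ` {T. T \<subseteq> A \<and> card T = t}"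
      then obtain U where "T = insert a U" "U \<subseteq> A" "card U = t" by auto
      moreover have "finite U" using \<open>U \<subseteq> A\<close> fin by (auto intro: finite_subset)
      moreover have "a \<notin> U" using \<open>U \<subseteq> A\<close> a by blast
      ultimately show ?thesis by auto
    qed auto
  qed
  have fin1: "finite {T. T \<subseteq> A \<and> card T = k}" for k
    using fin by (auto intro: finite_subset[of _ "Pow A"])
  have disj: "{T. T \<subseteq> A \<and> card T = Suc t} \<inter> insert a ` {T. T \<subseteq> A \<and> card T = t} = {}"
    using a by auto
  have inj: "inj_on (insert a) {T. T \<subseteq> A \<and> card T = t}"
    using a by (auto simp: inj_on_def)
  have "elem (insert a A) (Suc t) = elem A (Suc t) + (\<Sum>T\<in>insert a ` {T. T \<subseteq> A \<and> card T = t}. \<Prod>i\<in>T. X i)"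
    unfolding elem_def split by (rule sum.union_disjoint) (auto simp: fin1 disj)
  also have "(\<Sum>T\<in>insert a ` {T. T \<subseteq> A \<and> card T = t}. \<Prod>i\<in>T. X i) = (\<Sum>T\<in>{T. T \<subseteq> A \<and> card T = t}. \<Prod>i\<in>insert a T. X i)"
    by (rule sum.reindex[OF inj, unfolded comp_def])
  also have "\<dots> = (\<Sum>T\<in>{T. T \<subseteq> A \<and> card T = t}. X a * (\<Prod>i\<in>T. X i))"
  proof (rule sum.cong)
    fix T assume "T \<in> {T. T \<subseteq> A \<and> card T = t}"
    then have "finite T" "a \<notin> T" using fin a by (auto intro: finite_subset)
    then show "(\<Prod>i\<in>insert a T. X i) = X a * (\<Prod>i\<in>T. X i)" by simp
  qed simp
  finally show ?thesis by (simp add: elem_def sum_distrib_left)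
qed

lemma tr_image_image[simp]: "tr i ` tr i ` T = T"
  by (simp add: image_image)

lemma card_tr_image[simp]: "card (tr i ` T) = card T"
  by (rule card_image) (meson inj_tr inj_on_subset subset_UNIV)

lemma prod_X_swp: "swp i (\<Prod>k\<in>T. X k) = (\<Prod>k\<in>tr i ` T. X k)"
proof -
  have "swp i (\<Prod>k\<in>T. X k) = (\<Prod>k\<in>T. X (tr i k))" by (simp add: swp_prod swp_X)
  also have "\<dots> = (\<Prod>k\<in>tr i ` T. X k)"
    by (subst prod.reindex) (auto intro: inj_on_subset[OF inj_tr])
  finally show ?thesis .
qed

lemma elem_swp:
  assumes inv: "\<And>k. k \<in> A \<Longrightarrow> tr i k \<in> A"
  shows "swp i (elem A m) = elem A m"
proof -
  have "swp i (elem A m) = (\<Sum>T\<in>{T. T \<subseteq> A \<and> card T = m}. \<Prod>k\<in>tr i ` T. X k)"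
    unfolding elem_def swp_sum prod_X_swp ..
  also have "\<dots> = elem A m"
    unfolding elem_def
  proof (rule sum.reindex_bij_witness[of _ "\<lambda>T. tr i ` T" "\<lambda>T. tr i ` T"])
    fix T assume T: "T \<in> {T. T \<subseteq> A \<and> card T = m}"
    then show "tr i ` tr i ` T = T" by simp
    show "tr i ` T \<in> {T. T \<subseteq> A \<and> card T = m}" using T inv by auto
  next
    fix T assume T: "T \<in> {T. T \<subseteq> A \<and> card T = m}"
    then show "tr i ` T \<in> {T. T \<subseteq> A \<and> card T = m}" using inv by auto
  qed simp_all
  finally show ?thesis .
qed

lemma elem_V: "elem A m \<in> VV A"
  unfolding elem_def by (intro V_sum V_prod V_X) auto




lemma dd_one[simp]: "dd i 1 = 0"
  by (rule dd_sym) simp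

lemma dd_zero[simp]: "dd i 0 = 0"
  by (rule dd_sym) simp

lemma atLeastLessThan_Suc_insert: "1 \<le> k \<Longrightarrow> {1..<Suc k} = insert k {1..<k}"
  by auto

lemma DCE:
  assumes "1 \<le> k" "k \<le> n"
  shows "dc n k (elem {1..<n} t) = (if n - k \<le> t then elem {1..<k} (t - (n - k)) else 0)"
proof -
  have "\<forall>k t. n - k = d \<longrightarrow> 1 \<le> k \<longrightarrow> k \<le> n \<longrightarrow> dc n k (elem {1..<n} t) = (if n - k \<le> t then elem {1..<k} (t - (n - k)) else 0)" for d
  proof (induction d)
    case 0
    then show ?case by simp
  next
    case (Suc d)
    show ?case
    proof (intro allI impI)
      fix k t assume k: "n - k = Suc d" "1 \<le> k" "k \<le> n"
      then have kn: "k < n" by simp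
      have IH: "dc n (Suc k) (elem {1..<n} t) = (if d \<le> t then elem {1..<Suc k} (t - d) else 0)"
        using Suc.IH k by (metis Suc_diff_Suc diff_Suc_1 kn le_SucI not_less_eq_eq Suc_leI)
      show "dc n k (elem {1..<n} t) = (if n - k \<le> t then elem {1..<k} (t - (n - k)) else 0)"
      proof (cases "d \<le> t")
        case False
        then show ?thesis using IH k kn by (simp add: dc_step)
      next
        case True
        show ?thesis
        proof (cases "t - d")
          case 0
          then have "\<not> Suc d \<le> t" using True by simp
          then show ?thesis using IH True 0 k kn by (simp add: dc_step elem_0)
        next
          case (Suc s)
          have sym: "swp k (elem {1..<k} m) = elem {1..<k} m" for m
            by (rule elem_swp) (auto simp: tr_def)
          have "dc n k (elem {1..<n} t) = dd k (elem {1..<Suc k} (Suc s))"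
            using IH True Suc kn by (simp add: dc_step)
          also have "elem {1..<Suc k} (Suc s) = elem {1..<k} (Suc s) + elem {1..<k} s * X k"
          proof -
            have "{1..<Suc k} = insert k {1..<k}" using k by auto
            then show ?thesis using elem_insert[of "{1..<k}" k s] by (simp add: ac_simps)
          qed
          also have "dd k (elem {1..<k} (Suc s) + elem {1..<k} s * X k) = elem {1..<k} s"
            by (simp only: dd_add dd_sym[OF sym] dd_symmult[OF sym] dd_X, simp)
          finally have res: "dc n k (elem {1..<n} t) = elem {1..<k} s" .
          have "n - k \<le> t" "t - (n - k) = s" using Suc k(1) True by arith+
          then show ?thesis using res by simp
        qed
      qed
    qed
  qed
  then show ?thesis using assms by blast
qed

lemma elem_full_sym: "1 \<le> i \<Longrightarrow> i < n \<Longrightarrow> swp i (elem {1..n} m) = elem {1..n} m"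
  by (rule elem_swp) (auto simp: tr_def)

lemma Xn_elem: "1 \<le> n \<Longrightarrow> X n * elem {1..<n} t = elem {1..n} (Suc t) - elem {1..<n} (Suc t)"
proof -
  assume n: "1 \<le> n"
  have "{1..n} = insert n {1..<n}" using n by auto
  then show ?thesis by (simp add: elem_insert)
qed

lemma F_step: "1 \<le> n \<Longrightarrow> X n ^ Suc a * elem {1..<n} t
   = elem {1..n} (Suc t) * (X n ^ a * elem {1..<n} 0) - X n ^ a * elem {1..<n} (Suc t)"
proof -
  assume n: "1 \<le> n"
  have "X n ^ Suc a * elem {1..<n} t = X n ^ a * (X n * elem {1..<n} t)" by (simp add: mult.assoc)
  also have "\<dots> = X n ^ a * (elem {1..n} (Suc t) - elem {1..<n} (Suc t))" using Xn_elem[OF n] by simp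
  finally show ?thesis by (simp add: elem_0 algebra_simps)
qed

lemma Cl:
  assumes "1 \<le> k" "k \<le> n" "a \<le> n - k"
  shows "dc n k (X n ^ a * elem {1..<n} t) = (-1) ^ a * (if n - k \<le> a + t then elem {1..<k} (a + t - (n - k)) else 0)"
  using assms(3)
proof (induction a arbitrary: t)
  case 0
  then show ?case using DCE[OF assms(1,2)] by simp
next
  case (Suc a)
  have n: "1 \<le> n" using assms by simp
  have symE: "\<forall>i\<in>{k..<n}. swp i (elem {1..n} (Suc t)) = elem {1..n} (Suc t)"
  proof
    fix i assume "i \<in> {k..<n}"
    then show "swp i (elem {1..n} (Suc t)) = elem {1..n} (Suc t)"
      by (intro elem_full_sym) (use assms in auto)
  qed
  have "dc n k (X n ^ Suc a * elem {1..<n} t) = elem {1..n} (Suc t) * dc n k (X n ^ a * elem {1..<n} 0) - dc n k (X n ^ a * elem {1..<n} (Suc t))"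
    by (subst F_step[OF n]) (simp only: dc_diff dc_symmult[OF symE])
  also have "dc n k (X n ^ a * elem {1..<n} 0) = 0"
    using Suc by simp
  also have "dc n k (X n ^ a * elem {1..<n} (Suc t)) = (-1) ^ a * (if n - k \<le> a + Suc t then elem {1..<k} (a + Suc t - (n - k)) else 0)"
    using Suc by simp
  finally show ?case by simp
qed

lemma pjr_F: "pjr n j r = (-1) ^ r * (X n ^ r * elem {1..<n} (n - j - r))"
  by (simp add: pjr_def mult.assoc)

lemma neg1_sym: "swp i ((-1) ^ r) = (-1) ^ r"
  by simp

lemma dc_pjr: assumes "j \<in> {1..n}" "r \<le> n - j" shows "dc n j (pjr n j r) = 1"
proof -
  have "dc n j (pjr n j r) = (-1) ^ r * dc n j (X n ^ r * elem {1..<n} (n - j - r))"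
    unfolding pjr_F by (rule dc_symmult) simp
  also have "\<dots> = (-1) ^ r * ((-1) ^ r * elem {1..<j} 0)"
    using assms by (subst Cl) auto
  also have "\<dots> = 1" by (simp add: elem_0 flip: power_add mult_2)
  finally show ?thesis .
qed

definition goodp :: "nat \<Rightarrow> nat \<Rightarrow> mpoly \<Rightarrow> bool" where
  "goodp n m g \<longleftrightarrow> (\<forall>i. 1 \<le> i \<and> i < n \<and> i \<noteq> m - 1 \<longrightarrow> swp i g = g)"

lemma goodp_diff: "goodp n m f \<Longrightarrow> goodp n m g \<Longrightarrow> goodp n m (f - g)"
  by (simp add: goodp_def swp_diff)

lemma goodp_mult: "goodp n m f \<Longrightarrow> goodp n m g \<Longrightarrow> goodp n m (f * g)"
  by (simp add: goodp_def swp_mult)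

lemma goodp_E: "goodp n m (elem {1..n} s)"
  unfolding goodp_def by (intro allI impI elem_full_sym) auto

lemma goodp_neg1: "goodp n m ((-1) ^ r)"
  by (simp add: goodp_def)

lemma G0: assumes "1 \<le> m" "m \<le> n" shows "goodp n m (dc n m (elem {1..<n} t))"
proof -
  have "goodp n m (elem {1..<m} s)" for s
    unfolding goodp_def
  proof (intro allI impI)
    fix i assume i: "1 \<le> i \<and> i < n \<and> i \<noteq> m - 1"
    show "swp i (elem {1..<m} s) = elem {1..<m} s"
      by (rule elem_swp) (use i in \<open>auto simp: tr_def\<close>)
  qed
  moreover have "goodp n m 0" by (simp add: goodp_def)
  ultimately show ?thesis using DCE[OF assms] by simp
qed

lemma G: assumes "1 \<le> m" "m \<le> n" shows "goodp n m (dc n m (X n ^ a * elem {1..<n} t))"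
proof (induction a arbitrary: t)
  case 0
  then show ?case using G0[OF assms] by simp
next
  case (Suc a)
  have n: "1 \<le> n" using assms by simp
  have symE: "\<forall>i\<in>{m..<n}. swp i (elem {1..n} (Suc t)) = elem {1..n} (Suc t)"
  proof
    fix i assume "i \<in> {m..<n}"
    then show "swp i (elem {1..n} (Suc t)) = elem {1..n} (Suc t)"
      by (intro elem_full_sym) (use assms in auto)
  qed
  have eq: "dc n m (X n ^ Suc a * elem {1..<n} t) = elem {1..n} (Suc t) * dc n m (X n ^ a * elem {1..<n} 0) - dc n m (X n ^ a * elem {1..<n} (Suc t))"
    by (subst F_step[OF n]) (simp only: dc_diff dc_symmult[OF symE])
  show ?case unfolding eq by (intro goodp_diff goodp_mult goodp_E Suc.IH)
qed

lemma goodp_pjr: assumes "1 \<le> m" "m \<le> n" shows "goodp n m (dc n m (pjr n j r))"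
proof -
  have "dc n m (pjr n j r) = (-1) ^ r * dc n m (X n ^ r * elem {1..<n} (n - j - r))"
    unfolding pjr_F by (rule dc_symmult) simp
  then show ?thesis using G[OF assms] goodp_neg1 goodp_mult by simp
qed

lemma pjr_V: "1 \<le> n \<Longrightarrow> pjr n j r \<in> VV {1..n}"
  unfolding pjr_def
  by (intro V_mult V_neg1_pow V_power V_X V_mono[OF elem_V]) auto

lemma pjr_Pn1: "1 \<le> n \<Longrightarrow> pjr n j r \<in> Pn1 n"
  unfolding Pn1_def mem_Collect_eq Pn_V
proof (intro conjI ballI pjr_V)
  fix i assume "1 \<le> n" "i \<in> {1..<n - 1}"
  then have "swp i (X n) = X n" "swp i (elem {1..<n} (n - j - r)) = elem {1..<n} (n - j - r)"
    by (auto simp: swp_X tr_def intro!: elem_swp)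
  then show "swp i (pjr n j r) = pjr n j r"
    by (simp add: pjr_def swp_mult swp_power)
qed

lemma hcompl_single: "hcompl {n} m = X n ^ m"
proof -
  have "{\<alpha>. PM_keys \<alpha> \<subseteq> {n} \<and> (\<Sum>i\<in>{n}. PM_lookup \<alpha> i) = m} = {PM_single n m}"
  proof (rule set_eqI, rule iffI)
    fix \<alpha> assume "\<alpha> \<in> {\<alpha>. PM_keys \<alpha> \<subseteq> {n} \<and> (\<Sum>i\<in>{n}. PM_lookup \<alpha> i) = m}"
    then have a: "PM_keys \<alpha> \<subseteq> {n}" "PM_lookup \<alpha> n = m" by auto
    have "\<alpha> = PM_single n m"
    proof (rule poly_mapping_eqI)
      fix k show "PM_lookup \<alpha> k = PM_lookup (PM_single n m) k"
        using a by (cases "k = n") (auto simp: lookup_single in_keys_iff)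
    qed
    then show "\<alpha> \<in> {PM_single n m}" by simp
  qed simp
  then show ?thesis by (simp add: hcompl_def monom_def X_power)
qed

lemma pjr_0: "j \<in> {1..n} \<Longrightarrow> pjr n j 0 = elem {1..<n} (n - j)"
  by (simp add: pjr_def)

lemma pjr_top: "pjr n j (n - j) = (-1) ^ (n - j) * X n ^ (n - j)"
  by (simp add: pjr_def elem_0)




definition ezero :: ext where "ezero = (\<lambda>S. 0)"

definition fs :: "ext \<Rightarrow> bool" where "fs x \<longleftrightarrow> (\<forall>S. x S \<noteq> 0 \<longrightarrow> finite S)"

definition inv :: "nat set \<Rightarrow> nat set \<Rightarrow> (nat \<times> nat) set" where
  "inv T U = {(t, u). t \<in> T \<and> u \<in> U \<and> u < t}"

lemma esgn_inv: "esgn T U = (-1) ^ card (inv T U)"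
  by (simp add: esgn_def inv_def)

lemma inv_finite: "finite T \<Longrightarrow> finite U \<Longrightarrow> finite (inv T U)"
  unfolding inv_def by (rule finite_subset[of _ "T \<times> U"]) auto

lemma esgn_Un_right:
  assumes "finite T" "finite U" "finite V" "U \<inter> V = {}"
  shows "esgn T (U \<union> V) = esgn T U * esgn T V"
proof -
  have "inv T (U \<union> V) = inv T U \<union> inv T V" "inv T U \<inter> inv T V = {}"
    using assms(4) by (auto simp: inv_def)
  then have "card (inv T (U \<union> V)) = card (inv T U) + card (inv T V)"
    using assms by (simp add: card_Un_disjoint inv_finite)
  then show ?thesis by (simp add: esgn_inv power_add)
qed

lemma esgn_Un_left:
  assumes "finite T" "finite U" "finite V" "T \<inter> U = {}"
  shows "esgn (T \<union> U) V = esgn T V * esgn U V"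
proof -
  have "inv (T \<union> U) V = inv T V \<union> inv U V" "inv T V \<inter> inv U V = {}"
    using assms(4) by (auto simp: inv_def)
  then have "card (inv (T \<union> U) V) = card (inv T V) + card (inv U V)"
    using assms by (simp add: card_Un_disjoint inv_finite)
  then show ?thesis by (simp add: esgn_inv power_add)
qed

lemma esgn_empty_left[simp]: "esgn {} U = 1"
  by (simp add: esgn_def)

lemma esgn_empty_right[simp]: "esgn T {} = 1"
  by (simp add: esgn_def)

lemma ext_mul_inf: "infinite S \<Longrightarrow> ext_mul a b S = 0"
  by (simp add: ext_mul_def)

lemma fs_mul[simp]: "fs (ext_mul a b)"
  unfolding fs_def using ext_mul_inf by blast

lemma fs_one[simp]: "fs ext_one"
  by (simp add: fs_def ext_one_def)

lemma fs_zero[simp]: "fs ezero"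
  by (simp add: fs_def ezero_def)

lemma sum_Pow_only_empty:
  assumes "finite S" "\<And>T. T \<subseteq> S \<Longrightarrow> T \<noteq> {} \<Longrightarrow> g T = 0"
  shows "(\<Sum>T\<in>Pow S. g T) = g {}"
proof -
  have "(\<Sum>T\<in>Pow S. g T) = g {} + (\<Sum>T\<in>Pow S - {{}}. g T)"
    using assms(1) by (subst sum.remove[of _ "{}"]) auto
  also have "(\<Sum>T\<in>Pow S - {{}}. g T) = 0"
    using assms(2) by (intro sum.neutral) auto
  finally show ?thesis by simp
qed

lemma sum_Pow_only_full:
  assumes "finite S" "\<And>T. T \<subseteq> S \<Longrightarrow> T \<noteq> S \<Longrightarrow> g T = 0"
  shows "(\<Sum>T\<in>Pow S. g T) = g S"
proof -
  have "(\<Sum>T\<in>Pow S. g T) = g S + (\<Sum>T\<in>Pow S - {S}. g T)"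
    using assms(1) by (subst sum.remove[of _ "S"]) auto
  also have "(\<Sum>T\<in>Pow S - {S}. g T) = 0"
    using assms(2) by (intro sum.neutral) auto
  finally show ?thesis by simp
qed

lemma ext_mul_scal_left: "fs x \<Longrightarrow> ext_mul (ext_scal f) x = (\<lambda>S. f * x S)"
proof (rule ext)
  fix S assume x: "fs x"
  show "ext_mul (ext_scal f) x S = f * x S"
  proof (cases "finite S")
    case True
    then show ?thesis unfolding ext_mul_def
      by (subst sum_Pow_only_empty) (auto simp: ext_scal_def)
  next
    case False
    then show ?thesis using x by (simp add: ext_mul_inf fs_def) blast
  qed
qed

lemma ext_mul_scal_right: "fs x \<Longrightarrow> ext_mul x (ext_scal f) = (\<lambda>S. x S * f)"
proof (rule ext)
  fix S assume x: "fs x"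
  show "ext_mul x (ext_scal f) S = x S * f"
  proof (cases "finite S")
    case True
    then show ?thesis unfolding ext_mul_def
      by (subst sum_Pow_only_full) (auto simp: ext_scal_def)
  next
    case False
    then show ?thesis using x by (simp add: ext_mul_inf fs_def) blast
  qed
qed

lemma ext_one_scal: "ext_one = ext_scal 1"
  by (simp add: ext_one_def ext_scal_def)

lemma ext_mul_one_left[simp]: "fs x \<Longrightarrow> ext_mul ext_one x = x"
  by (simp add: ext_one_scal ext_mul_scal_left)

lemma ext_mul_one_right[simp]: "fs x \<Longrightarrow> ext_mul x ext_one = x"
  by (simp add: ext_one_scal ext_mul_scal_right)

lemma ext_mul_assoc: "ext_mul (ext_mul a b) c = ext_mul a (ext_mul b c)"
proof (rule ext)
  fix S
  show "ext_mul (ext_mul a b) c S = ext_mul a (ext_mul b c) S"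
  proof (cases "finite S")
    case False
    then show ?thesis by (simp add: ext_mul_inf)
  next
    case fin: True
    define h where "h T W = esgn T (W - T) * esgn W (S - W) * a T * b (W - T) * c (S - W)" for T W
    have "ext_mul (ext_mul a b) c S = (\<Sum>W\<in>Pow S. \<Sum>T\<in>Pow W. h T W)"
      unfolding ext_mul_def h_def by (simp add: sum_distrib_left sum_distrib_right ac_simps)
    also have "\<dots> = (\<Sum>W\<in>Pow S. \<Sum>T\<in>{T\<in>Pow S. T \<subseteq> W}. h T W)"
      by (rule sum.cong[OF refl], rule sum.cong) auto
    also have "\<dots> = (\<Sum>T\<in>Pow S. \<Sum>W\<in>{W\<in>Pow S. T \<subseteq> W}. h T W)"
      using sum.swap_restrict[of "Pow S" "Pow S" "\<lambda>W T. h T W" "\<lambda>W T. T \<subseteq> W"] fin by simp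
    also have "\<dots> = (\<Sum>T\<in>Pow S. esgn T (S - T) * a T * ext_mul b c (S - T))"
    proof (rule sum.cong[OF refl])
      fix T assume T: "T \<in> Pow S"
      have "(\<Sum>W\<in>{W\<in>Pow S. T \<subseteq> W}. h T W) = (\<Sum>U\<in>Pow (S - T). h T (T \<union> U))"
      proof (rule sum.reindex_bij_witness[of _ "\<lambda>U. T \<union> U" "\<lambda>W. W - T"])
      qed (use T in \<open>auto simp: Un_absorb1\<close>)
      also have "\<dots> = (\<Sum>U\<in>Pow (S - T). esgn T (S - T) * a T * (esgn U (S - T - U) * b U * c (S - T - U)))"
      proof (rule sum.cong[OF refl])
        fix U assume U: "U \<in> Pow (S - T)"
        have fT: "finite T" "finite U" "finite (S - T - U)" using T U fin by (auto intro: finite_subset)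
        have e1: "T \<union> U - T = U" "S - (T \<union> U) = S - T - U" using U by auto
        have s1: "esgn (T \<union> U) (S - T - U) = esgn T (S - T - U) * esgn U (S - T - U)"
          using fT U by (intro esgn_Un_left) auto
        have s2: "esgn T (S - T) = esgn T U * esgn T (S - T - U)"
        proof -
          have "S - T = U \<union> (S - T - U)" using U by auto
          then show ?thesis using fT by (metis Diff_disjoint esgn_Un_right)
        qed
        show "h T (T \<union> U) = esgn T (S - T) * a T * (esgn U (S - T - U) * b U * c (S - T - U))"
          unfolding h_def e1 s1 s2 by (simp add: ac_simps)
      qed
      also have "\<dots> = esgn T (S - T) * a T * ext_mul b c (S - T)"
        unfolding ext_mul_def by (simp add: sum_distrib_left)
      finally show "(\<Sum>W\<in>{W\<in>Pow S. T \<subseteq> W}. h T W) = esgn T (S - T) * a T * ext_mul b c (S - T)" .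
    qed
    also have "\<dots> = ext_mul a (ext_mul b c) S" by (simp only: ext_mul_def[of a])
    finally show ?thesis .
  qed
qed




lemma ext_mul_sum_left: "ext_mul (\<lambda>S. \<Sum>i\<in>I. f i S) y = (\<lambda>S. \<Sum>i\<in>I. ext_mul (f i) y S)"
  unfolding ext_mul_def by (rule ext) (simp add: sum_distrib_left sum_distrib_right, rule sum.swap)

lemma ext_mul_sum_right: "ext_mul x (\<lambda>S. \<Sum>i\<in>I. f i S) = (\<lambda>S. \<Sum>i\<in>I. ext_mul x (f i) S)"
  unfolding ext_mul_def by (rule ext) (simp add: sum_distrib_left sum_distrib_right, rule sum.swap)

lemma ext_mul_cmul_left: "ext_mul (\<lambda>S. c * x S) y = (\<lambda>S. c * ext_mul x y S)"
  unfolding ext_mul_def by (rule ext) (simp add: sum_distrib_left ac_simps)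

lemma ext_mul_cmul_right: "ext_mul x (\<lambda>S. c * y S) = (\<lambda>S. c * ext_mul x y S)"
  unfolding ext_mul_def by (rule ext) (simp add: sum_distrib_left ac_simps)

lemma ext_mul_neg_left: "ext_mul (\<lambda>S. - x S) y = (\<lambda>S. - ext_mul x y S)"
  using ext_mul_cmul_left[of "-1" x y] by simp

lemma ext_mul_zero_left[simp]: "ext_mul ezero y = ezero"
  unfolding ext_mul_def ezero_def by simp

lemma ext_mul_zero_right[simp]: "ext_mul x ezero = ezero"
  unfolding ext_mul_def ezero_def by simp

definition deg1 :: "ext \<Rightarrow> bool" where
  "deg1 v \<longleftrightarrow> (\<forall>S. v S \<noteq> 0 \<longrightarrow> (\<exists>k. S = {k}))"

lemma deg1_fs: "deg1 v \<Longrightarrow> fs v"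
  unfolding deg1_def fs_def by fastforce

lemma inv_single: "inv {a} {b} = (if b < a then {(a, b)} else {})"
  by (auto simp: inv_def)

lemma esgn_single: "esgn {a} {b} = (if b < a then -1 else 1)"
  by (simp add: esgn_inv inv_single)

lemma ext_mul_anticomm:
  assumes v: "deg1 v" and w: "deg1 w"
  shows "ext_mul v w S = - ext_mul w v S"
proof (cases "finite S")
  case False
  then show ?thesis by (simp add: ext_mul_inf)
next
  case fin: True
  have "ext_mul w v S = (\<Sum>T\<in>Pow S. esgn (S - T) T * w (S - T) * v T)"
    unfolding ext_mul_def
  proof (rule sum.reindex_bij_witness[of _ "\<lambda>X. S - X" "\<lambda>X. S - X"])
    fix U assume "U \<in> Pow S"
    then have U: "S - (S - U) = U" by blast
    show "S - (S - U) = U" by (rule U)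
    show "S - U \<in> Pow S" by blast
    show "esgn (S - (S - U)) (S - U) * w (S - (S - U)) * v (S - U) = esgn U (S - U) * w U * v (S - U)"
      by (simp only: U)
  qed blast+
  also have "\<dots> = - (\<Sum>T\<in>Pow S. esgn T (S - T) * v T * w (S - T))"
    unfolding sum_negf[symmetric]
  proof (rule sum.cong[OF refl])
    fix T assume T: "T \<in> Pow S"
    show "esgn (S - T) T * w (S - T) * v T = - (esgn T (S - T) * v T * w (S - T))"
    proof (cases "v T = 0 \<or> w (S - T) = 0")
      case True
      then show ?thesis by auto
    next
      case False
      then have "v T \<noteq> 0" "w (S - T) \<noteq> 0" by auto
      then obtain a b where ab: "T = {a}" "S - T = {b}"
        using v w unfolding deg1_def by metis
      then have "a \<noteq> b" by blast
      have e1: "esgn (S - T) T = esgn {b} {a}" "esgn T (S - T) = esgn {a} {b}" by (simp_all only: ab(2), simp_all only: ab(1))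
      have "esgn (S - T) T = - esgn T (S - T)" unfolding e1 using \<open>a \<noteq> b\<close> by (simp add: esgn_single)
      then show ?thesis by simp
    qed
  qed
  finally show ?thesis unfolding ext_mul_def by simp
qed

lemma ext_mul_square:
  assumes v: "deg1 v"
  shows "ext_mul v v = ezero"
proof (rule ext)
  fix S
  have "ext_mul v v S = - ext_mul v v S" by (rule ext_mul_anticomm[OF v v])
  then have "2 * ext_mul v v S = 0" by (simp add: mult_2)
  then show "ext_mul v v S = ezero S" by (simp add: ezero_def)
qed

definition Pi :: "(nat \<Rightarrow> ext) \<Rightarrow> nat set \<Rightarrow> ext" where
  "Pi w S = ext_prodlist (map w (sorted_list_of_set S))"

lemma Pi_empty[simp]: "Pi w {} = ext_one"
  by (simp add: Pi_def ext_prodlist_def)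

lemma Pi_insert_min:
  assumes "finite S" "\<forall>s\<in>S. m < s"
  shows "Pi w (insert m S) = ext_mul (w m) (Pi w S)"
proof -
  have "Min (insert m S) = m" by (rule Min_eqI) (use assms in \<open>auto simp: less_imp_le\<close>)
  moreover have "insert m S - {m} = S" using assms by auto
  ultimately have "sorted_list_of_set (insert m S) = m # sorted_list_of_set S"
    using sorted_list_of_set_nonempty[of "insert m S"] assms by simp
  then show ?thesis by (simp add: Pi_def ext_prodlist_def)
qed

lemma fs_Pi: "fs (Pi w S)"
  by (cases "sorted_list_of_set S") (simp_all add: Pi_def ext_prodlist_def)

lemma Pi_single: "deg1 (w a) \<Longrightarrow> Pi w {a} = w a"
  using Pi_insert_min[of "{}" a w] by (simp add: deg1_fs)

lemma ext_fun_eqI: "(\<And>S. x S = y S) \<Longrightarrow> x = y"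
  by (rule ext)

lemma INS:
  assumes w: "\<And>k. deg1 (w k)" and fin: "finite S"
  shows "ext_mul (w a) (Pi w S) = (if a \<in> S then ezero else (\<lambda>U. (-1) ^ card {s\<in>S. s < a} * Pi w (insert a S) U))"
  using fin
proof (induction S rule: finite_linorder_min_induct)
  case empty
  then show ?case by (simp add: w deg1_fs Pi_single)
next
  case (insert m S)
  have mS: "m \<notin> S" using insert by auto
  have PiI: "Pi w (insert m S) = ext_mul (w m) (Pi w S)" by (rule Pi_insert_min) (use insert in auto)
  consider "a < m" | "a = m" | "m < a" by linarith
  then show ?case
  proof cases
    case 1
    then have ni: "a \<notin> insert m S" and "{s\<in>insert m S. s < a} = {}" using insert by auto
    then have c0: "card {s\<in>insert m S. s < a} = 0" by simp
    have "Pi w (insert a (insert m S)) = ext_mul (w a) (Pi w (insert m S))"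
      by (rule Pi_insert_min) (use insert 1 in auto)
    then show ?thesis unfolding if_not_P[OF ni] c0 by simp
  next
    case 2
    have "ext_mul (w a) (Pi w (insert m S)) = ext_mul (ext_mul (w a) (w a)) (Pi w S)"
      unfolding PiI 2 by (simp add: ext_mul_assoc)
    then show ?thesis using 2 by (simp add: ext_mul_square w)
  next
    case 3
    have "ext_mul (w a) (Pi w (insert m S)) = ext_mul (ext_mul (w a) (w m)) (Pi w S)"
      unfolding PiI by (simp add: ext_mul_assoc)
    also have "ext_mul (w a) (w m) = (\<lambda>U. - ext_mul (w m) (w a) U)"
      by (rule ext) (rule ext_mul_anticomm[OF w w])
    also have "ext_mul (\<lambda>U. - ext_mul (w m) (w a) U) (Pi w S) = (\<lambda>U. - ext_mul (w m) (ext_mul (w a) (Pi w S)) U)"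
      by (simp add: ext_mul_neg_left ext_mul_assoc)
    finally have eq: "ext_mul (w a) (Pi w (insert m S)) = (\<lambda>U. - ext_mul (w m) (ext_mul (w a) (Pi w S)) U)" .
    show ?thesis
    proof (cases "a \<in> S")
      case True
      then show ?thesis unfolding eq insert.IH if_P[OF True] ext_mul_zero_right by (simp add: ezero_def)
    next
      case False
      have c: "card {s\<in>insert m S. s < a} = Suc (card {s\<in>S. s < a})"
      proof -
        have "{s\<in>insert m S. s < a} = insert m {s\<in>S. s < a}" using 3 by auto
        then show ?thesis using mS insert by simp
      qed
      have Pi2: "Pi w (insert m (insert a S)) = ext_mul (w m) (Pi w (insert a S))"
        by (rule Pi_insert_min) (use insert 3 in auto)
      have "insert m (insert a S) = insert a (insert m S)" by auto
      then have "ext_mul (w m) (Pi w (insert a S)) = Pi w (insert a (insert m S))" using Pi2 by simp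
      then have e3: "ext_mul (w m) (Pi w (insert a S)) = Pi w (insert a (insert m S))" .
      have ni: "a \<notin> insert m S" using False 3 by auto
      show ?thesis unfolding if_not_P[OF ni] c eq insert.IH if_not_P[OF False] ext_mul_cmul_right e3
        by simp

    qed
  qed
qed

lemma inv_insert_left: "m \<notin> T \<Longrightarrow> inv (insert m T) U = inv T U \<union> (\<lambda>u. (m, u)) ` {u\<in>U. u < m}"
  by (auto simp: inv_def)

lemma esgn_insert_left:
  assumes "finite T" "finite U" "m \<notin> T"
  shows "esgn (insert m T) U = esgn T U * (-1) ^ card {u\<in>U. u < m}"
proof -
  have d: "inv T U \<inter> (\<lambda>u. (m, u)) ` {u\<in>U. u < m} = {}" using assms(3) by (auto simp: inv_def)
  have "card (inv (insert m T) U) = card (inv T U) + card {u\<in>U. u < m}"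
    unfolding inv_insert_left[OF assms(3)]
    using assms d by (subst card_Un_disjoint) (auto simp: inv_finite card_image inj_on_def)
  then show ?thesis by (simp add: esgn_inv power_add)
qed

lemma PiMul:
  assumes w: "\<And>k. deg1 (w k)" and fT: "finite T" and fU: "finite U"
  shows "ext_mul (Pi w T) (Pi w U) = (if T \<inter> U = {} then (\<lambda>S. esgn T U * Pi w (T \<union> U) S) else ezero)"
  using fT
proof (induction T rule: finite_linorder_min_induct)
  case empty
  then show ?case by (simp add: fs_Pi)
next
  case (insert m T)
  have mT: "m \<notin> T" using insert by auto
  have PiI: "Pi w (insert m T) = ext_mul (w m) (Pi w T)" by (rule Pi_insert_min) (use insert in auto)
  have eq: "ext_mul (Pi w (insert m T)) (Pi w U) = ext_mul (w m) (ext_mul (Pi w T) (Pi w U))"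
    unfolding PiI by (rule ext_mul_assoc)
  show ?case
  proof (cases "T \<inter> U = {}")
    case False
    then show ?thesis unfolding eq insert.IH by auto
  next
    case True
    have "ext_mul (Pi w (insert m T)) (Pi w U) = (\<lambda>S. esgn T U * ext_mul (w m) (Pi w (T \<union> U)) S)"
      unfolding eq insert.IH using True by (simp add: ext_mul_cmul_right)
    also have "ext_mul (w m) (Pi w (T \<union> U)) = (if m \<in> T \<union> U then ezero else (\<lambda>V. (-1) ^ card {s\<in>T \<union> U. s < m} * Pi w (insert m (T \<union> U)) V))"
      using INS[of w "T \<union> U" m, OF w finite_UnI[OF insert(1) fU]] by simp
    finally have eq2: "ext_mul (Pi w (insert m T)) (Pi w U) = (\<lambda>S. esgn T U * (if m \<in> T \<union> U then ezero else (\<lambda>V. (-1) ^ card {s\<in>T \<union> U. s < m} * Pi w (insert m (T \<union> U)) V)) S)" .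
    show ?thesis
    proof (cases "m \<in> U")
      case True
      then show ?thesis unfolding eq2 by (auto simp: ezero_def)
    next
      case False
      have c: "{s\<in>T \<union> U. s < m} = {u\<in>U. u < m}" using insert by auto
      have "esgn (insert m T) U = esgn T U * (-1) ^ card {u\<in>U. u < m}"
        by (rule esgn_insert_left) (use insert fU in auto)
      then show ?thesis unfolding eq2 using False mT True c by (auto simp: ac_simps)
    qed
  qed
qed




definition Psi :: "(nat \<Rightarrow> ext) \<Rightarrow> (mpoly \<Rightarrow> mpoly) \<Rightarrow> nat \<Rightarrow> ext \<Rightarrow> ext" where
  "Psi w \<phi> n f = ext_sum (\<lambda>S. ext_mul (ext_scal (\<phi> (f S))) (Pi w S)) (Pow {1..n})"

lemma act_Psi: "act n i = Psi (act_gen i) (swp i) n"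
  by (rule ext) (simp add: act_def Psi_def Pi_def)

lemma Phi_Psi: "Phi n r = Psi (\<lambda>j. omr n j (r j)) (\<lambda>x. x) n"
  by (rule ext) (simp add: Phi_def Psi_def Pi_def)

lemma Psi_apply: "Psi w \<phi> n f U = (\<Sum>S\<in>Pow {1..n}. \<phi> (f S) * Pi w S U)"
  by (simp add: Psi_def ext_sum_def ext_mul_scal_left fs_Pi)

definition rhom :: "(mpoly \<Rightarrow> mpoly) \<Rightarrow> bool" where
  "rhom \<phi> \<longleftrightarrow> (\<forall>x y. \<phi> (x + y) = \<phi> x + \<phi> y) \<and> (\<forall>x y. \<phi> (x * y) = \<phi> x * \<phi> y) \<and> \<phi> 1 = 1"

lemma rhom_swp: "rhom (swp i)"
  by (simp add: rhom_def swp_add swp_mult)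

lemma rhom_id: "rhom (\<lambda>x. x)"
  by (simp add: rhom_def)

lemma rhom_add: "rhom \<phi> \<Longrightarrow> \<phi> (x + y) = \<phi> x + \<phi> y"
  by (simp add: rhom_def)

lemma rhom_mult: "rhom \<phi> \<Longrightarrow> \<phi> (x * y) = \<phi> x * \<phi> y"
  by (simp add: rhom_def)

lemma rhom_one: "rhom \<phi> \<Longrightarrow> \<phi> 1 = 1"
  by (simp add: rhom_def)

lemma rhom_zero: "rhom \<phi> \<Longrightarrow> \<phi> 0 = 0"
  using rhom_add[of \<phi> 0 0] by simp

lemma rhom_neg: "rhom \<phi> \<Longrightarrow> \<phi> (- x) = - \<phi> x"
  using rhom_add[of \<phi> x "- x"] rhom_zero[of \<phi>] by (simp add: eq_neg_iff_add_eq_0 add.commute)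

lemma rhom_diff: "rhom \<phi> \<Longrightarrow> \<phi> (x - y) = \<phi> x - \<phi> y"
  using rhom_add[of \<phi> x "- y"] rhom_neg[of \<phi> y] by simp

lemma rhom_sum: "rhom \<phi> \<Longrightarrow> \<phi> (sum f A) = (\<Sum>a\<in>A. \<phi> (f a))"
  by (induction A rule: infinite_finite_induct) (simp_all add: rhom_zero rhom_add)

lemma rhom_pow: "rhom \<phi> \<Longrightarrow> \<phi> (x ^ k) = \<phi> x ^ k"
  by (induction k) (simp_all add: rhom_one rhom_mult)

lemma rhom_esgn: "rhom \<phi> \<Longrightarrow> \<phi> (esgn T U) = esgn T U"
  by (simp add: esgn_def rhom_pow rhom_neg rhom_one)

definition supp :: "nat \<Rightarrow> ext \<Rightarrow> bool" where
  "supp n x \<longleftrightarrow> (\<forall>S. x S \<noteq> 0 \<longrightarrow> S \<subseteq> {1..n})"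

lemma ext_mul_apply: "ext_mul a b S = (\<Sum>T\<in>Pow S. esgn T (S - T) * a T * b (S - T))"
  by (simp add: ext_mul_def)

lemma Psi_mult:
  assumes \<phi>: "rhom \<phi>" and w: "\<And>k. deg1 (w k)" and f: "supp n f" and g: "supp n g"
  shows "Psi w \<phi> n (ext_mul f g) = ext_mul (Psi w \<phi> n f) (Psi w \<phi> n g)"
proof (rule ext)
  fix U
  define P where "P = Pow {1..n :: nat}"
  have finP: "finite P" by (simp add: P_def)
  define k where "k T R = esgn T R * \<phi> (f T) * \<phi> (g R) * Pi w (T \<union> R) U" for T R
  have "Psi w \<phi> n (ext_mul f g) U = (\<Sum>S\<in>P. \<Sum>T\<in>Pow S. esgn T (S - T) * \<phi> (f T) * \<phi> (g (S - T)) * Pi w S U)"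
    unfolding Psi_apply P_def ext_mul_apply
    by (simp add: rhom_sum[OF \<phi>] rhom_mult[OF \<phi>] rhom_esgn[OF \<phi>] sum_distrib_right)
  also have "\<dots> = (\<Sum>S\<in>P. \<Sum>T\<in>{T\<in>P. T \<subseteq> S}. esgn T (S - T) * \<phi> (f T) * \<phi> (g (S - T)) * Pi w S U)"
    by (rule sum.cong[OF refl], rule sum.cong) (auto simp: P_def)
  also have "\<dots> = (\<Sum>T\<in>P. \<Sum>S\<in>{S\<in>P. T \<subseteq> S}. esgn T (S - T) * \<phi> (f T) * \<phi> (g (S - T)) * Pi w S U)"
    using sum.swap_restrict[of P P "\<lambda>S T. esgn T (S - T) * \<phi> (f T) * \<phi> (g (S - T)) * Pi w S U" "\<lambda>S T. T \<subseteq> S"] finP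
    by simp
  also have "\<dots> = (\<Sum>T\<in>P. \<Sum>R\<in>{R\<in>P. T \<inter> R = {}}. k T R)"
  proof (rule sum.cong[OF refl])
    fix T assume T: "T \<in> P"
    show "(\<Sum>S\<in>{S\<in>P. T \<subseteq> S}. esgn T (S - T) * \<phi> (f T) * \<phi> (g (S - T)) * Pi w S U) = (\<Sum>R\<in>{R\<in>P. T \<inter> R = {}}. k T R)"
    proof (rule sum.reindex_bij_witness[of _ "\<lambda>R. T \<union> R" "\<lambda>S. S - T"])
      fix S assume S: "S \<in> {S\<in>P. T \<subseteq> S}"
      then show "T \<union> (S - T) = S" by auto
      show "S - T \<in> {R\<in>P. T \<inter> R = {}}" using S by (auto simp: P_def)
      have "T \<union> (S - T) = S" using S by auto
      then show "k T (S - T) = esgn T (S - T) * \<phi> (f T) * \<phi> (g (S - T)) * Pi w S U"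
        by (simp add: k_def)
    next
      fix R assume R: "R \<in> {R\<in>P. T \<inter> R = {}}"
      then show "T \<union> R - T = R" by auto
      show "T \<union> R \<in> {S\<in>P. T \<subseteq> S}" using R T by (auto simp: P_def)
    qed
  qed
  also have "\<dots> = (\<Sum>T\<in>P. \<Sum>R\<in>P. \<phi> (f T) * \<phi> (g R) * ext_mul (Pi w T) (Pi w R) U)"
  proof (rule sum.cong[OF refl])
    fix T assume T: "T \<in> P"
    have "(\<Sum>R\<in>P. \<phi> (f T) * \<phi> (g R) * ext_mul (Pi w T) (Pi w R) U) = (\<Sum>R\<in>P. if T \<inter> R = {} then k T R else 0)"
    proof (rule sum.cong[OF refl])
      fix R assume R: "R \<in> P"
      have "finite T" "finite R" using T R by (auto simp: P_def intro: finite_subset)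
      then show "\<phi> (f T) * \<phi> (g R) * ext_mul (Pi w T) (Pi w R) U = (if T \<inter> R = {} then k T R else 0)"
        by (simp add: PiMul[OF w] k_def ezero_def)
    qed
    also have "\<dots> = (\<Sum>R\<in>{R\<in>P. T \<inter> R = {}}. k T R)"
      using finP by (simp add: sum.inter_filter)
    finally show "(\<Sum>R\<in>{R\<in>P. T \<inter> R = {}}. k T R) = (\<Sum>R\<in>P. \<phi> (f T) * \<phi> (g R) * ext_mul (Pi w T) (Pi w R) U)" by simp
  qed
  also have "\<dots> = ext_mul (\<lambda>V. \<Sum>T\<in>P. \<phi> (f T) * Pi w T V) (\<lambda>V. \<Sum>R\<in>P. \<phi> (g R) * Pi w R V) U"
  proof -
    have "ext_mul (\<lambda>V. \<Sum>T\<in>P. \<phi> (f T) * Pi w T V) (\<lambda>V. \<Sum>R\<in>P. \<phi> (g R) * Pi w R V) U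
        = (\<Sum>T\<in>P. ext_mul (\<lambda>V. \<phi> (f T) * Pi w T V) (\<lambda>V. \<Sum>R\<in>P. \<phi> (g R) * Pi w R V) U)"
      using ext_mul_sum_left[of "\<lambda>T V. \<phi> (f T) * Pi w T V" P] by simp
    also have "\<dots> = (\<Sum>T\<in>P. \<phi> (f T) * (\<Sum>R\<in>P. ext_mul (Pi w T) (\<lambda>V. \<phi> (g R) * Pi w R V) U))"
      by (simp add: ext_mul_cmul_left ext_mul_sum_right[of "Pi w _" "\<lambda>R V. \<phi> (g R) * Pi w R V" P])
    also have "\<dots> = (\<Sum>T\<in>P. \<Sum>R\<in>P. \<phi> (f T) * \<phi> (g R) * ext_mul (Pi w T) (Pi w R) U)"
      by (simp add: ext_mul_cmul_right sum_distrib_left ac_simps)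
    finally show ?thesis by simp
  qed
  also have "\<dots> = ext_mul (Psi w \<phi> n f) (Psi w \<phi> n g) U"
    by (simp add: Psi_apply[abs_def] P_def)
  finally show "Psi w \<phi> n (ext_mul f g) U = ext_mul (Psi w \<phi> n f) (Psi w \<phi> n g) U" .
qed

lemma Psi_add: "rhom \<phi> \<Longrightarrow> Psi w \<phi> n (\<lambda>S. f S + g S) = (\<lambda>U. Psi w \<phi> n f U + Psi w \<phi> n g U)"
  by (rule ext) (simp add: Psi_apply rhom_add distrib_right sum.distrib)

lemma Psi_diff: "rhom \<phi> \<Longrightarrow> Psi w \<phi> n (\<lambda>S. f S - g S) = (\<lambda>U. Psi w \<phi> n f U - Psi w \<phi> n g U)"
  by (rule ext) (simp add: Psi_apply rhom_diff left_diff_distrib sum_subtractf)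

lemma Psi_sum: "rhom \<phi> \<Longrightarrow> Psi w \<phi> n (\<lambda>S. \<Sum>a\<in>A. g a S) = (\<lambda>U. \<Sum>a\<in>A. Psi w \<phi> n (g a) U)"
  by (rule ext) (simp add: Psi_apply rhom_sum sum_distrib_right, rule sum.swap)

lemma Psi_cmul: "rhom \<phi> \<Longrightarrow> Psi w \<phi> n (\<lambda>S. c * f S) = (\<lambda>U. \<phi> c * Psi w \<phi> n f U)"
  by (rule ext) (simp add: Psi_apply rhom_mult sum_distrib_left ac_simps)

lemma Psi_one: "rhom \<phi> \<Longrightarrow> Psi w \<phi> n ext_one = ext_one"
proof (rule ext)
  fix U assume \<phi>: "rhom \<phi>"
  have "Psi w \<phi> n ext_one U = \<phi> (ext_one {}) * Pi w {} U"
    unfolding Psi_apply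
    by (rule sum_Pow_only_empty) (auto simp: ext_one_def rhom_zero[OF \<phi>])
  then show "Psi w \<phi> n ext_one U = ext_one U" by (simp add: ext_one_def rhom_one[OF \<phi>])
qed

lemma supp_mul: "supp n a \<Longrightarrow> supp n b \<Longrightarrow> supp n (ext_mul a b)"
  unfolding supp_def
proof (intro allI impI)
  fix S assume a: "\<forall>S. a S \<noteq> 0 \<longrightarrow> S \<subseteq> {1..n}" and b: "\<forall>S. b S \<noteq> 0 \<longrightarrow> S \<subseteq> {1..n}"
    and S: "ext_mul a b S \<noteq> 0"
  obtain T where "T \<in> Pow S" "esgn T (S - T) * a T * b (S - T) \<noteq> 0"
    using S[unfolded ext_mul_apply] by (rule sum.not_neutral_contains_not_neutral)
  then have "T \<subseteq> S" "a T \<noteq> 0" "b (S - T) \<noteq> 0" by auto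
  then show "S \<subseteq> {1..n}" using a b by blast
qed

lemma supp_one: "supp n ext_one"
  by (simp add: supp_def ext_one_def)

lemma supp_Pi: "finite S \<Longrightarrow> (\<forall>k\<in>S. supp n (w k)) \<Longrightarrow> supp n (Pi w S)"
proof (induction S rule: finite_linorder_min_induct)
  case empty
  then show ?case by (simp add: supp_one)
next
  case (insert m S)
  then show ?case by (subst Pi_insert_min) (auto intro: supp_mul)
qed

lemma supp_Psi: "(\<forall>k\<in>{1..n}. supp n (w k)) \<Longrightarrow> supp n (Psi w \<phi> n f)"
  unfolding supp_def Psi_apply
proof (intro allI impI)
  fix U assume w: "\<forall>k\<in>{1..n}. \<forall>S. w k S \<noteq> 0 \<longrightarrow> S \<subseteq> {1..n}" and U: "(\<Sum>S\<in>Pow {1..n}. \<phi> (f S) * Pi w S U) \<noteq> 0"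
  obtain S where S: "S \<in> Pow {1..n}" "\<phi> (f S) * Pi w S U \<noteq> 0"
    using U by (rule sum.not_neutral_contains_not_neutral)
  then have S: "S \<in> Pow {1..n}" "Pi w S U \<noteq> 0" by auto
  then have "supp n (Pi w S)"
    using w by (intro supp_Pi) (auto simp: supp_def intro: finite_subset)
  then show "U \<subseteq> {1..n}" using S by (simp add: supp_def)
qed

definition coefV :: "nat \<Rightarrow> ext \<Rightarrow> bool" where
  "coefV n x \<longleftrightarrow> (\<forall>S. x S \<in> VV {1..n})"

lemma esgn_V: "esgn T U \<in> VV A"
  by (simp add: esgn_def)

lemma coefV_mul: "coefV n a \<Longrightarrow> coefV n b \<Longrightarrow> coefV n (ext_mul a b)"
  unfolding coefV_def ext_mul_apply by (intro allI V_sum V_mult esgn_V) auto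

lemma coefV_one: "coefV n ext_one"
  by (simp add: coefV_def ext_one_def)

lemma coefV_Pi: "finite S \<Longrightarrow> (\<forall>k\<in>S. coefV n (w k)) \<Longrightarrow> coefV n (Pi w S)"
proof (induction S rule: finite_linorder_min_induct)
  case empty
  then show ?case by (simp add: coefV_one)
next
  case (insert m S)
  then show ?case by (subst Pi_insert_min) (auto intro: coefV_mul)
qed

lemma coefV_Psi:
  assumes "\<forall>k\<in>{1..n}. coefV n (w k)" "\<And>x. x \<in> VV {1..n} \<Longrightarrow> \<phi> x \<in> VV {1..n}" "coefV n f"
  shows "coefV n (Psi w \<phi> n f)"
  unfolding coefV_def Psi_apply
proof (intro allI V_sum V_mult)
  fix U S assume S: "S \<in> Pow {1..n}"
  then show "\<phi> (f S) \<in> VV {1..n}" using assms(2,3) by (simp add: coefV_def)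
  have "coefV n (Pi w S)" using S assms(1) by (intro coefV_Pi) (auto intro: finite_subset)
  then show "Pi w S U \<in> VV {1..n}" by (simp add: coefV_def)
qed




lemma sum_only:
  assumes "finite A" "a \<in> A" "\<And>b. b \<in> A \<Longrightarrow> b \<noteq> a \<Longrightarrow> g b = 0"
  shows "sum g A = g a"
proof -
  have "sum g A = g a + sum g (A - {a})" using assms(1,2) by (rule sum.remove)
  also have "sum g (A - {a}) = 0" using assms(3) by (intro sum.neutral) auto
  finally show ?thesis by simp
qed

definition vecv :: "(nat \<Rightarrow> mpoly) \<Rightarrow> nat set \<Rightarrow> ext" where
  "vecv c K = (\<lambda>S. \<Sum>k\<in>K. c k * omega k S)"

lemma fs_omega: "fs (omega k)"
  by (simp add: fs_def omega_def)

lemma omr_vecv: "omr n j r = vecv (\<lambda>k. dc n k (pjr n j r)) {j..n}"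
  by (simp add: omr_def vecv_def ext_sum_def ext_mul_scal_left fs_omega)

lemma vecv_single: "finite K \<Longrightarrow> vecv c K {m} = (if m \<in> K then c m else 0)"
proof -
  assume fin: "finite K"
  have "vecv c K {m} = (\<Sum>k\<in>K. if k = m then c k else 0)"
    unfolding vecv_def omega_def by (rule sum.cong) auto
  then show ?thesis using fin by simp
qed

lemma vecv_nonsingle: "\<forall>k. S \<noteq> {k} \<Longrightarrow> vecv c K S = 0"
  by (simp add: vecv_def omega_def)

lemma deg1_vecv: "deg1 (vecv c K)"
  unfolding deg1_def using vecv_nonsingle by blast

lemma act_gen_apply: "act_gen i k U = omega k U + (if k = i then (X i - X (i + 1)) * omega (i + 1) U else 0)"
  by (simp add: act_gen_def ext_add_def ext_mul_scal_left fs_omega)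

lemma deg1_act_gen: "deg1 (act_gen i k)"
  unfolding deg1_def act_gen_apply omega_def by auto

lemma Psi_omega:
  assumes "k \<in> {1..n}" "rhom \<phi>" "deg1 (w k)"
  shows "Psi w \<phi> n (omega k) = w k"
proof (rule ext)
  fix U
  have "Psi w \<phi> n (omega k) U = \<phi> (omega k {k}) * Pi w {k} U"
    unfolding Psi_apply
    by (rule sum_only) (use assms in \<open>auto simp: omega_def rhom_zero\<close>)
  then show "Psi w \<phi> n (omega k) U = w k U"
    using assms by (simp add: omega_def rhom_one Pi_single)
qed

lemma act_vecv:
  assumes "K \<subseteq> {1..n}"
  shows "act n i (vecv c K) = (\<lambda>U. \<Sum>k\<in>K. swp i (c k) * act_gen i k U)"
proof -
  have "act n i (vecv c K) = (\<lambda>U. \<Sum>k\<in>K. Psi (act_gen i) (swp i) n (\<lambda>S. c k * omega k S) U)"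
    unfolding act_Psi vecv_def by (rule Psi_sum[OF rhom_swp])
  also have "\<dots> = (\<lambda>U. \<Sum>k\<in>K. swp i (c k) * act_gen i k U)"
  proof (rule ext, rule sum.cong[OF refl])
    fix U k assume k: "k \<in> K"
    show "Psi (act_gen i) (swp i) n (\<lambda>S. c k * omega k S) U = swp i (c k) * act_gen i k U"
      unfolding Psi_cmul[OF rhom_swp] using k assms
      by (subst Psi_omega) (auto simp: rhom_swp deg1_act_gen)
  qed
  finally show ?thesis .
qed

lemma omr_inv:
  assumes j: "j \<in> {1..n}" and r: "r \<le> n - j" and i: "i \<in> {1..<n}"
  shows "act n i (omr n j r) = omr n j r"
proof -
  define c where "c k = dc n k (pjr n j r)" for k
  define K where "K = {j..n}"
  have Ksub: "K \<subseteq> {1..n}" using j by (auto simp: K_def)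
  have finK: "finite K" by (simp add: K_def)
  have cj: "c j = 1" using dc_pjr[OF j r] by (simp add: c_def)
  have good: "swp i (c m) = c m" if "m \<in> K" "m \<noteq> i + 1" for m
  proof -
    have "goodp n m (c m)" unfolding c_def using that j by (intro goodp_pjr) (auto simp: K_def)
    then show ?thesis using that i j by (auto simp: goodp_def K_def)
  qed
  have omr: "omr n j r = vecv c K" by (simp add: omr_vecv c_def[abs_def] K_def)
  have act: "act n i (omr n j r) U = (\<Sum>k\<in>K. swp i (c k) * omega k U) + (if i \<in> K then swp i (c i) * ((X i - X (i + 1)) * omega (i + 1) U) else 0)" for U
  proof -
    have "act n i (omr n j r) U = (\<Sum>k\<in>K. swp i (c k) * omega k U + (if k = i then swp i (c i) * ((X i - X (i + 1)) * omega (i + 1) U) else 0))"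
      unfolding omr act_vecv[OF Ksub] act_gen_apply by (rule sum.cong) (auto simp: distrib_left)
    also have "\<dots> = (\<Sum>k\<in>K. swp i (c k) * omega k U) + (if i \<in> K then swp i (c i) * ((X i - X (i + 1)) * omega (i + 1) U) else 0)"
      using finK by (simp add: sum.distrib)
    finally show ?thesis .
  qed
  show ?thesis
  proof (rule ext)
    fix U
    show "act n i (omr n j r) U = omr n j r U"
    proof (cases "\<exists>m. U = {m}")
      case False
      then have o: "\<And>k. omega k U = 0" by (auto simp: omega_def)
      have A: "act n i (omr n j r) U = 0" by (simp add: act o)
      have B: "omr n j r U = 0" unfolding omr using False by (simp add: vecv_nonsingle)
      show ?thesis using A B by simp
    next
      case True
      then obtain m where U: "U = {m}" by blast
      have L: "(\<Sum>k\<in>K. swp i (c k) * omega k U) = (if m \<in> K then swp i (c m) else 0)"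
        using vecv_single[OF finK, of "\<lambda>k. swp i (c k)" m] U by (simp add: vecv_def)
      have R: "omr n j r U = (if m \<in> K then c m else 0)"
        unfolding omr U by (rule vecv_single[OF finK])
      show ?thesis
      proof (cases "m = i + 1")
        case False
        then have "omega (i + 1) U = 0" using U by (simp add: omega_def)
        then show ?thesis unfolding act L R using good False by simp
      next
        case True
        have om: "omega (i + 1) U = 1" using U True by (simp add: omega_def)
        show ?thesis
        proof (cases "i \<in> K")
          case iK: True
          have mK: "m \<in> K" using iK True i by (auto simp: K_def)
          have ci: "c i = dd i (c (i + 1))" using iK i by (simp add: c_def dc_step)
          have "swp i (c i) = c i" unfolding ci by (rule swp_dd)
          then have "act n i (omr n j r) U = swp i (c (i + 1)) + (X i - X (i + 1)) * dd i (c (i + 1))"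
            unfolding act L using mK iK om True ci by (simp add: ac_simps)
          also have "\<dots> = c (i + 1)" by (simp only: dd_spec) simp
          finally show ?thesis unfolding R using mK True by simp
        next
          case iK: False
          show ?thesis
          proof (cases "m \<in> K")
            case mK: True
            then have "m = j" using iK True by (auto simp: K_def)
            then show ?thesis unfolding act L R using mK iK cj by simp
          next
            case False
            then show ?thesis unfolding act L R using iK by simp
          qed
        qed
      qed
    qed
  qed
qed




lemma deg1mul:
  assumes v: "deg1 v" and fin: "finite U"
  shows "ext_mul v P U = (\<Sum>l\<in>U. esgn {l} (U - {l}) * v {l} * P (U - {l}))"
proof -
  define g where "g T = esgn T (U - T) * v T * P (U - T)" for T
  have "ext_mul v P U = (\<Sum>T\<in>Pow U. g T)" by (simp add: ext_mul_apply g_def)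
  also have "\<dots> = (\<Sum>T\<in>(\<lambda>l. {l}) ` U. g T)"
  proof (rule sum.mono_neutral_right)
    show "finite (Pow U)" using fin by simp
    show "(\<lambda>l. {l}) ` U \<subseteq> Pow U" by auto
    show "\<forall>T\<in>Pow U - (\<lambda>l. {l}) ` U. g T = 0"
    proof
      fix T assume T: "T \<in> Pow U - (\<lambda>l. {l}) ` U"
      show "g T = 0"
      proof (rule ccontr)
        assume "g T \<noteq> 0"
        then have "v T \<noteq> 0" by (auto simp: g_def)
        then obtain l where "T = {l}" using v unfolding deg1_def by metis
        then show False using T by auto
      qed
    qed
  qed
  also have "\<dots> = (\<Sum>l\<in>U. g {l})" by (subst sum.reindex) (auto simp: inj_on_def)
  finally show ?thesis by (simp add: g_def)
qed

definition trih :: "(nat \<Rightarrow> ext) \<Rightarrow> nat \<Rightarrow> bool" where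
  "trih w k \<longleftrightarrow> deg1 (w k) \<and> w k {k} = 1 \<and> (\<forall>U. w k U \<noteq> 0 \<longrightarrow> (\<exists>l\<ge>k. U = {l}))"

lemma esgn_min: "\<forall>s\<in>S. m < s \<Longrightarrow> esgn {m} S = 1"
proof -
  assume "\<forall>s\<in>S. m < s"
  then have "inv {m} S = {}" by (auto simp: inv_def)
  then show ?thesis by (simp add: esgn_inv)
qed

lemma TRI:
  assumes "finite S" "\<forall>k\<in>S. trih w k"
  shows "Pi w S S = 1 \<and> (\<forall>U. Pi w S U \<noteq> 0 \<longrightarrow> U = S \<or> \<Sum>S < \<Sum>U)"
  using assms
proof (induction S rule: finite_linorder_min_induct)
  case empty
  then show ?case by (simp add: ext_one_def)
next
  case (insert m S)
  have fS: "finite S" and mS: "\<forall>s\<in>S. m < s" and mnS: "m \<notin> S" using insert by auto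
  have tm: "trih w m" using insert by auto
  have IH: "Pi w S S = 1" "\<And>U. Pi w S U \<noteq> 0 \<Longrightarrow> U = S \<or> \<Sum>S < \<Sum>U" using insert by auto
  have d1: "deg1 (w m)" and wm: "w m {m} = 1" and ws: "\<And>U. w m U \<noteq> 0 \<Longrightarrow> \<exists>l\<ge>m. U = {l}"
    using tm by (auto simp: trih_def)
  have PiI: "Pi w (insert m S) = ext_mul (w m) (Pi w S)" by (rule Pi_insert_min[OF fS mS])
  have sumI: "\<Sum>(insert m S) = m + \<Sum>S" using fS mnS by simp
  have nz: "U = insert m S \<or> \<Sum>(insert m S) < \<Sum>U" if U: "Pi w (insert m S) U \<noteq> 0" for U
  proof -
    have fU: "finite U" using U unfolding PiI using ext_mul_inf by blast
    obtain l where l: "l \<in> U" "esgn {l} (U - {l}) * w m {l} * Pi w S (U - {l}) \<noteq> 0"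
      using U[unfolded PiI deg1mul[OF d1 fU]] by (rule sum.not_neutral_contains_not_neutral)
    then have "w m {l} \<noteq> 0" "Pi w S (U - {l}) \<noteq> 0" by auto
    then have lm: "m \<le> l" and c: "U - {l} = S \<or> \<Sum>S < \<Sum>(U - {l})"
      using ws IH(2) by (metis singleton_inject, blast)
    have sU: "\<Sum>U = l + \<Sum>(U - {l})" using fU l(1) by (simp add: sum.remove)
    show ?thesis
    proof (cases "U - {l} = S \<and> l = m")
      case True
      then have "U = insert m S" using l(1) by blast
      then show ?thesis by simp
    next
      case False
      then have "\<Sum>(insert m S) < \<Sum>U" using c lm sU sumI by auto
      then show ?thesis by simp
    qed
  qed
  have val: "Pi w (insert m S) (insert m S) = 1"
  proof -
    have "Pi w (insert m S) (insert m S) = (\<Sum>l\<in>insert m S. esgn {l} (insert m S - {l}) * w m {l} * Pi w S (insert m S - {l}))"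
      unfolding PiI by (rule deg1mul[OF d1]) (simp add: fS)
    also have "\<dots> = esgn {m} (insert m S - {m}) * w m {m} * Pi w S (insert m S - {m})"
    proof (rule sum_only)
      fix l assume l: "l \<in> insert m S" "l \<noteq> m"
      then have "l \<in> S" by simp
      then have lm: "m < l" using mS by simp
      have "Pi w S (insert m S - {l}) = 0"
      proof (rule ccontr)
        assume "Pi w S (insert m S - {l}) \<noteq> 0"
        then have "insert m S - {l} = S \<or> \<Sum>S < \<Sum>(insert m S - {l})" using IH(2) by blast
        moreover have "insert m S - {l} \<noteq> S" using l mnS by auto
        moreover have "\<Sum>(insert m S - {l}) + l = m + \<Sum>S"
          using sum.remove[of "insert m S" l "\<lambda>x. x"] l fS sumI by simp
        ultimately show False using lm by linarith
      qed
      then show "esgn {l} (insert m S - {l}) * w m {l} * Pi w S (insert m S - {l}) = 0" by simp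
    qed (use fS in auto)
    also have "\<dots> = 1" using mnS by (simp add: esgn_min[OF mS] wm IH(1))
    finally show ?thesis .
  qed
  show ?case using nz val by blast
qed

lemma EXTRACT:
  assumes \<phi>: "rhom \<phi>" and tri: "\<forall>k\<in>{1..n}. trih w k" and S0: "S0 \<subseteq> {1..n}"
    and low: "\<And>T. h T \<noteq> 0 \<Longrightarrow> \<Sum>S0 \<le> \<Sum>T" and hs: "supp n h"
  shows "Psi w \<phi> n h S0 = \<phi> (h S0)"
proof -
  have fin: "finite S" if "S \<subseteq> {1..n}" for S using that by (auto intro: finite_subset)
  have "Psi w \<phi> n h S0 = \<phi> (h S0) * Pi w S0 S0"
    unfolding Psi_apply
  proof (rule sum_only)
    fix S assume S: "S \<in> Pow {1..n}" "S \<noteq> S0"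
    show "\<phi> (h S) * Pi w S S0 = 0"
    proof (cases "h S = 0")
      case True then show ?thesis by (simp add: rhom_zero[OF \<phi>])
    next
      case False
      then have "\<Sum>S0 \<le> \<Sum>S" by (rule low)
      moreover have "Pi w S S0 \<noteq> 0 \<Longrightarrow> S0 = S \<or> \<Sum>S < \<Sum>S0"
        using TRI[of S w] S tri fin by blast
      ultimately show ?thesis using S by auto
    qed
  qed (use S0 in auto)
  also have "Pi w S0 S0 = 1" using TRI[of S0 w] S0 tri fin by blast
  finally show ?thesis by simp
qed

lemma LOWER:
  assumes \<phi>: "rhom \<phi>" and tri: "\<forall>k\<in>{1..n}. trih w k"
    and low: "\<And>T. h T \<noteq> 0 \<Longrightarrow> k \<le> \<Sum>T" and U: "\<Sum>U < k"
  shows "Psi w \<phi> n h U = 0"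
  unfolding Psi_apply
proof (rule sum.neutral, rule ballI)
  fix S assume S: "S \<in> Pow {1..n}"
  show "\<phi> (h S) * Pi w S U = 0"
  proof (cases "h S = 0")
    case True then show ?thesis by (simp add: rhom_zero[OF \<phi>])
  next
    case False
    then have "k \<le> \<Sum>S" by (rule low)
    moreover have "finite S" using S by (auto intro: finite_subset)
    then have "Pi w S U \<noteq> 0 \<Longrightarrow> U = S \<or> \<Sum>S < \<Sum>U"
      using TRI[of S w] S tri by blast
    ultimately show ?thesis using U by auto
  qed
qed




lemma carrier_iff: "a \<in> ext_carrier n \<longleftrightarrow> supp n a \<and> coefV n a"
  by (simp add: ext_carrier_def supp_def coefV_def Pn_V)

lemma tens_iff: "f \<in> tens_carrier n \<longleftrightarrow> supp n f \<and> coefV n f \<and> (\<forall>S i. i \<in> {1..<n} \<longrightarrow> swp i (f S) = f S)"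
  by (auto simp: tens_carrier_def carrier_iff Lam_def coefV_def Pn_V)

lemma LamOm_iff: "a \<in> LamOm n \<longleftrightarrow> supp n a \<and> coefV n a \<and> (\<forall>i\<in>{1..<n}. act n i a = a)"
  by (simp add: LamOm_def carrier_iff)

lemma supp_add: "supp n a \<Longrightarrow> supp n b \<Longrightarrow> supp n (\<lambda>S. a S + b S)"
  unfolding supp_def by (metis add.right_neutral add_0)

lemma supp_vecv: "K \<subseteq> {1..n} \<Longrightarrow> finite K \<Longrightarrow> supp n (vecv c K)"
  unfolding supp_def
proof (intro allI impI)
  fix S assume K: "K \<subseteq> {1..n}" "finite K" and S: "vecv c K S \<noteq> 0"
  then obtain m where m: "S = {m}" using vecv_nonsingle by blast
  then have "m \<in> K" using S vecv_single[OF K(2), of c m] by (auto split: if_splits)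
  then show "S \<subseteq> {1..n}" using K m by auto
qed

lemma coefV_vecv: "(\<forall>k\<in>K. c k \<in> VV {1..n}) \<Longrightarrow> coefV n (vecv c K)"
  unfolding coefV_def vecv_def omega_def by (auto intro!: V_sum V_mult)

lemma trih_act_gen: "trih (act_gen i) k"
  unfolding trih_def using deg1_act_gen[of i k]
  by (auto simp: act_gen_apply omega_def split: if_splits)

lemma supp_act_gen: "k \<in> {1..n} \<Longrightarrow> i < n \<Longrightarrow> supp n (act_gen i k)"
  by (auto simp: supp_def act_gen_apply omega_def split: if_splits)

context
  fixes n :: nat and r :: "nat \<Rightarrow> nat"
  assumes R: "\<forall>j\<in>{1..n}. r j \<le> n - j"
begin

definition W :: "nat \<Rightarrow> ext" where "W j = omr n j (r j)"

lemma W_vecv: "W j = vecv (\<lambda>k. dc n k (pjr n j (r j))) {j..n}"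
  by (simp add: W_def omr_vecv)

lemma W_deg1: "deg1 (W k)"
  by (simp add: W_vecv deg1_vecv)

lemma W_supp: "k \<in> {1..n} \<Longrightarrow> supp n (W k)"
  unfolding W_vecv by (rule supp_vecv) auto

lemma W_coef: "k \<in> {1..n} \<Longrightarrow> coefV n (W k)"
  unfolding W_vecv by (intro coefV_vecv ballI dc_V pjr_V) auto

lemma W_tri: "k \<in> {1..n} \<Longrightarrow> trih W k"
proof -
  assume k: "k \<in> {1..n}"
  have rk: "r k \<le> n - k" using R k by blast
  have one: "W k {k} = 1" unfolding W_vecv
    by (subst vecv_single) (use k dc_pjr[OF k rk] in auto)
  have "\<exists>l\<ge>k. U = {l}" if nz: "W k U \<noteq> 0" for U
  proof -
    have "\<exists>m. U = {m}"
    proof (rule ccontr)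
      assume "\<not> (\<exists>m. U = {m})"
      then have "\<forall>m. U \<noteq> {m}" by blast
      then have "W k U = 0" unfolding W_vecv by (rule vecv_nonsingle)
      then show False using nz by simp
    qed
    then obtain m where m: "U = {m}" by blast
    have "W k {m} = (if m \<in> {k..n} then dc n m (pjr n k (r k)) else 0)"
      unfolding W_vecv by (rule vecv_single) simp
    then have "m \<in> {k..n}" using nz m by (auto split: if_splits)
    then show ?thesis using m by auto
  qed
  then show ?thesis using one W_deg1 by (simp add: trih_def)
qed

lemma W_inv: "j \<in> {1..n} \<Longrightarrow> i \<in> {1..<n} \<Longrightarrow> act n i (W j) = W j"
  unfolding W_def using R by (intro omr_inv) auto

lemma Phi_W: "Phi n r = Psi W (\<lambda>x. x) n"
  by (simp add: Phi_Psi W_def[abs_def])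

lemma act_Pi:
  assumes i: "i \<in> {1..<n}"
  shows "finite S \<Longrightarrow> S \<subseteq> {1..n} \<Longrightarrow> act n i (Pi W S) = Pi W S"
proof (induction S rule: finite_linorder_min_induct)
  case empty
  then show ?case by (simp add: act_Psi Psi_one rhom_swp)
next
  case (insert m S)
  have PiI: "Pi W (insert m S) = ext_mul (W m) (Pi W S)" by (rule Pi_insert_min) (use insert in auto)
  have s1: "supp n (W m)" using insert by (intro W_supp) auto
  have s2: "supp n (Pi W S)" using insert by (intro supp_Pi ballI W_supp) auto
  have "act n i (Pi W (insert m S)) = ext_mul (act n i (W m)) (act n i (Pi W S))"
    unfolding PiI act_Psi by (rule Psi_mult[OF rhom_swp deg1_act_gen s1 s2])
  also have "act n i (W m) = W m" using insert i by (intro W_inv) auto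
  also have "act n i (Pi W S) = Pi W S" using insert by auto
  finally show ?case unfolding PiI .
qed

lemma Phi_apply: "Phi n r f U = (\<Sum>S\<in>Pow {1..n}. f S * Pi W S U)"
  by (simp add: Phi_W Psi_apply)

lemma Phi_in: assumes f: "f \<in> tens_carrier n" shows "Phi n r f \<in> LamOm n"
proof -
  have fs: "supp n f" "coefV n f" "\<And>S i. i \<in> {1..<n} \<Longrightarrow> swp i (f S) = f S" using f by (auto simp: tens_iff)
  have s: "supp n (Phi n r f)" unfolding Phi_W by (rule supp_Psi) (simp add: W_supp)
  have c: "coefV n (Phi n r f)" unfolding Phi_W by (rule coefV_Psi) (auto simp: W_coef fs)
  have inv: "act n i (Phi n r f) = Phi n r f" if i: "i \<in> {1..<n}" for i
  proof -
    have eq: "Phi n r f = (\<lambda>U. \<Sum>S\<in>Pow {1..n}. f S * Pi W S U)" by (rule ext) (rule Phi_apply)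
    have "act n i (\<lambda>U. \<Sum>S\<in>Pow {1..n}. f S * Pi W S U) = (\<lambda>U. \<Sum>S\<in>Pow {1..n}. Psi (act_gen i) (swp i) n (\<lambda>V. f S * Pi W S V) U)"
      unfolding act_Psi by (rule Psi_sum[OF rhom_swp, where g="\<lambda>S V. f S * Pi W S V"])
    also have "\<dots> = (\<lambda>U. \<Sum>S\<in>Pow {1..n}. f S * Pi W S U)"
    proof (rule ext, rule sum.cong[OF refl])
      fix U S assume S: "S \<in> Pow {1..n}"
      have "act n i (Pi W S) = Pi W S" using S i by (intro act_Pi) (auto intro: finite_subset)
      moreover have "Psi (act_gen i) (swp i) n (\<lambda>V. f S * Pi W S V) = (\<lambda>U. swp i (f S) * Psi (act_gen i) (swp i) n (Pi W S) U)"
        by (rule Psi_cmul[OF rhom_swp])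
      ultimately show "Psi (act_gen i) (swp i) n (\<lambda>V. f S * Pi W S V) U = f S * Pi W S U"
        using fs(3)[OF i] by (simp add: act_Psi)
    qed
    finally show ?thesis unfolding eq .
  qed
  show ?thesis using s c inv by (simp add: LamOm_iff)
qed

lemma Phi_diff: "Phi n r (\<lambda>S. a S - b S) = (\<lambda>U. Phi n r a U - Phi n r b U)"
  unfolding Phi_W by (rule Psi_diff[OF rhom_id])

lemma Phi_add': "Phi n r (\<lambda>S. a S + b S) = (\<lambda>U. Phi n r a U + Phi n r b U)"
  unfolding Phi_W by (rule Psi_add[OF rhom_id])

lemma Phi_zero: "Phi n r (\<lambda>S. 0) = (\<lambda>U. 0)"
  by (rule ext) (simp add: Phi_apply)

lemma W_tri_all: "\<forall>k\<in>{1..n}. trih W k"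
  using W_tri by blast

lemma Phi_inj: "inj_on (Phi n r) (tens_carrier n)"
proof (rule inj_onI)
  fix a b assume a: "a \<in> tens_carrier n" and b: "b \<in> tens_carrier n" and eq: "Phi n r a = Phi n r b"
  define h where "h = (\<lambda>S. a S - b S)"
  have sa: "supp n a" and sb: "supp n b" using a b by (auto simp: tens_iff)
  have hs: "supp n h" unfolding supp_def
  proof (intro allI impI)
    fix S assume "h S \<noteq> 0"
    then have "a S \<noteq> 0 \<or> b S \<noteq> 0" by (auto simp: h_def)
    then show "S \<subseteq> {1..n}" using sa sb by (auto simp: supp_def)
  qed
  have h0: "Phi n r h U = 0" for U unfolding h_def Phi_diff eq by simp
  have "\<forall>S. h S = 0"
  proof (rule ccontr)
    assume "\<not> (\<forall>S. h S = 0)"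
    then have ex: "\<exists>k S. h S \<noteq> 0 \<and> \<Sum>S = k" by blast
    define k0 where "k0 = (LEAST k. \<exists>S. h S \<noteq> 0 \<and> \<Sum>S = k)"
    obtain S0 where S0: "h S0 \<noteq> 0" "\<Sum>S0 = k0"
      using LeastI_ex[OF ex] unfolding k0_def by blast
    have low: "\<Sum>S0 \<le> \<Sum>T" if "h T \<noteq> 0" for T
      using that S0(2) unfolding k0_def by (auto intro: Least_le)
    have S0n: "S0 \<subseteq> {1..n}" using hs S0 by (simp add: supp_def)
    have "Phi n r h S0 = h S0"
      unfolding Phi_W by (rule EXTRACT[OF rhom_id W_tri_all S0n low hs])
    then show False using h0 S0 by simp
  qed
  then show "a = b" by (auto simp: h_def fun_eq_iff)
qed

lemma Phi_surj:
  "a \<in> LamOm n \<Longrightarrow> (\<forall>T. a T \<noteq> 0 \<longrightarrow> (\<Sum>{1..n} + 1) - d \<le> \<Sum>T) \<Longrightarrow> \<exists>f\<in>tens_carrier n. Phi n r f = a"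
proof (induction d arbitrary: a)
  case 0
  have "a T = 0" for T
  proof (rule ccontr)
    assume "a T \<noteq> 0"
    then have "T \<subseteq> {1..n}" "\<Sum>{1..n} + 1 \<le> \<Sum>T" using 0 by (auto simp: LamOm_iff supp_def)
    moreover have "\<Sum>T \<le> \<Sum>{1..n}" using calculation(1) by (intro sum_mono2) auto
    ultimately show False by simp
  qed
  then have "a = (\<lambda>S. 0)" by auto
  moreover have "(\<lambda>S. 0) \<in> tens_carrier n" by (simp add: tens_iff supp_def coefV_def)
  ultimately show ?case using Phi_zero by auto
next
  case (Suc d)
  define k where "k = (\<Sum>{1..n} + 1) - Suc d"
  have aL: "supp n a" "coefV n a" "\<And>i. i \<in> {1..<n} \<Longrightarrow> act n i a = a" using Suc.prems by (auto simp: LamOm_iff)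
  have alow: "\<And>T. a T \<noteq> 0 \<Longrightarrow> k \<le> \<Sum>T" using Suc.prems by (simp add: k_def)
  define f where "f = (\<lambda>S. if \<Sum>S = k then a S else 0)"
  have fsym: "swp i (f S) = f S" if i: "i \<in> {1..<n}" for i S
  proof (cases "\<Sum>S = k \<and> a S \<noteq> 0")
    case True
    then have Sn: "S \<subseteq> {1..n}" using aL(1) by (simp add: supp_def)
    have "act n i a S = swp i (a S)"
      unfolding act_Psi
      by (rule EXTRACT[OF rhom_swp _ Sn _ aL(1)]) (use True alow trih_act_gen in auto)
    then show ?thesis using aL(3)[OF i] True by (simp add: f_def)
  next
    case False
    then show ?thesis by (auto simp: f_def)
  qed
  have fT: "f \<in> tens_carrier n"
    using aL fsym by (auto simp: tens_iff supp_def coefV_def f_def)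
  define b where "b = (\<lambda>S. a S - Phi n r f S)"
  have PhiL: "Phi n r f \<in> LamOm n" by (rule Phi_in[OF fT])
  have bL: "b \<in> LamOm n"
  proof -
    have sP: "supp n (Phi n r f)" using PhiL by (simp add: LamOm_iff)
    have "supp n b" unfolding supp_def
    proof (intro allI impI)
      fix S assume "b S \<noteq> 0"
      then have "a S \<noteq> 0 \<or> Phi n r f S \<noteq> 0" by (auto simp: b_def)
      then show "S \<subseteq> {1..n}" using aL(1) sP by (auto simp: supp_def)
    qed
    moreover have "coefV n b" using aL PhiL by (auto simp: LamOm_iff coefV_def b_def intro: V_diff)
    moreover have "act n i b = b" if i: "i \<in> {1..<n}" for i
    proof -
      have "act n i b = (\<lambda>U. act n i a U - act n i (Phi n r f) U)"
        unfolding b_def act_Psi by (rule Psi_diff[OF rhom_swp])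
      then show ?thesis using aL(3)[OF i] PhiL i by (simp add: LamOm_iff b_def)
    qed
    ultimately show ?thesis by (simp add: LamOm_iff)
  qed
  have flow: "\<And>T. f T \<noteq> 0 \<Longrightarrow> k \<le> \<Sum>T" by (auto simp: f_def split: if_splits)
  have fs: "supp n f" using fT by (simp add: tens_iff)
  have blow: "(\<Sum>{1..n} + 1) - d \<le> \<Sum>T" if bT: "b T \<noteq> 0" for T
  proof (rule ccontr)
    assume "\<not> (\<Sum>{1..n} + 1) - d \<le> \<Sum>T"
    then have lt: "\<Sum>T \<le> k" by (simp add: k_def)
    show False
    proof (cases "\<Sum>T < k")
      case True
      have "a T = 0" using alow True by force
      moreover have "Phi n r f T = 0"
        unfolding Phi_W by (rule LOWER[OF rhom_id W_tri_all flow True])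
      ultimately show False using bT by (simp add: b_def)
    next
      case False
      then have eqk: "\<Sum>T = k" using lt by simp
      show False
      proof (cases "T \<subseteq> {1..n}")
        case True
        have "Phi n r f T = f T"
          unfolding Phi_W by (rule EXTRACT[OF rhom_id W_tri_all True _ fs]) (use flow eqk in auto)
        then show False using bT eqk by (simp add: b_def f_def)
      next
        case False
        then have "a T = 0" "Phi n r f T = 0" using aL(1) PhiL by (auto simp: supp_def LamOm_iff)
        then show False using bT by (simp add: b_def)
      qed
    qed
  qed
  obtain g where g: "g \<in> tens_carrier n" "Phi n r g = b" using Suc.IH[OF bL] blow by blast
  have "Phi n r (\<lambda>S. f S + g S) = a"
    unfolding Phi_add' g(2) by (rule ext) (simp add: b_def)
  moreover have "(\<lambda>S. f S + g S) \<in> tens_carrier n"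
    using fT g(1) by (auto simp: tens_iff coefV_def swp_add intro: V_add supp_add)
  ultimately show ?case by blast
qed

lemma Phi_bij: "bij_betw (Phi n r) (tens_carrier n) (LamOm n)"
proof (rule bij_betw_imageI[OF Phi_inj])
  show "Phi n r ` tens_carrier n = LamOm n"
  proof
    show "Phi n r ` tens_carrier n \<subseteq> LamOm n" using Phi_in by blast
    show "LamOm n \<subseteq> Phi n r ` tens_carrier n"
    proof
      fix a assume a: "a \<in> LamOm n"
      have "\<exists>f\<in>tens_carrier n. Phi n r f = a"
        by (rule Phi_surj[OF a, of "\<Sum>{1..n} + 1"]) simp
      then show "a \<in> Phi n r ` tens_carrier n" by blast
    qed
  qed
qed

lemma Phi_hom:
  assumes a: "a \<in> tens_carrier n" and b: "b \<in> tens_carrier n"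
  shows "Phi n r (ext_add a b) = ext_add (Phi n r a) (Phi n r b)"
    and "Phi n r (ext_mul a b) = ext_mul (Phi n r a) (Phi n r b)"
proof -
  show "Phi n r (ext_add a b) = ext_add (Phi n r a) (Phi n r b)"
    unfolding ext_add_def by (rule Phi_add')
  show "Phi n r (ext_mul a b) = ext_mul (Phi n r a) (Phi n r b)"
    unfolding Phi_W by (rule Psi_mult[OF rhom_id W_deg1]) (use a b in \<open>auto simp: tens_iff\<close>)
qed

lemma Phi_one: "Phi n r ext_one = ext_one"
  unfolding Phi_W by (rule Psi_one[OF rhom_id])

lemma omr_LamOm: "j \<in> {1..n} \<Longrightarrow> omr n j (r j) \<in> LamOm n"
  unfolding W_def[symmetric] LamOm_iff using W_supp W_coef W_inv by auto

end

theorem mainTheorem10: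
  fixes n :: nat
  shows "(\<forall>j\<in>{1..n}. \<forall>r\<le>n - j. pjr n j r \<in> Pn1 n \<and> dc n j (pjr n j r) = 1)
    \<and> (\<forall>r :: nat \<Rightarrow> nat. (\<forall>j\<in>{1..n}. r j \<le> n - j) \<longrightarrow>
         (\<forall>j\<in>{1..n}. omr n j (r j) \<in> LamOm n)
       \<and> bij_betw (Phi n r) (tens_carrier n) (LamOm n)
       \<and> (\<forall>a\<in>tens_carrier n. \<forall>b\<in>tens_carrier n.
            Phi n r (ext_add a b) = ext_add (Phi n r a) (Phi n r b)
          \<and> Phi n r (ext_mul a b) = ext_mul (Phi n r a) (Phi n r b))
       \<and> Phi n r ext_one = ext_one)
    \<and> (\<forall>j\<in>{1..n}. pjr n j 0 = elem {1..<n} (n - j)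
         \<and> pjr n j (n - j) = (-1) ^ (n - j) * hcompl {n} (n - j)
         \<and> pjr n j (n - j) = (-1) ^ (n - j) * X n ^ (n - j))"
proof (intro conjI ballI allI impI)
  fix j r assume j: "j \<in> {1..n}" and r: "r \<le> n - j"
  show "pjr n j r \<in> Pn1 n" using j by (intro pjr_Pn1) auto
  show "dc n j (pjr n j r) = 1" by (rule dc_pjr[OF j r])
next
  fix r :: "nat \<Rightarrow> nat" and j assume R: "\<forall>j\<in>{1..n}. r j \<le> n - j" and j: "j \<in> {1..n}"
  show "omr n j (r j) \<in> LamOm n" by (rule omr_LamOm[OF R j])
next
  fix r :: "nat \<Rightarrow> nat" assume R: "\<forall>j\<in>{1..n}. r j \<le> n - j"
  show "bij_betw (Phi n r) (tens_carrier n) (LamOm n)" by (rule Phi_bij[OF R])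
  show "Phi n r ext_one = ext_one" by (rule Phi_one[OF R])
  fix a b assume "a \<in> tens_carrier n" "b \<in> tens_carrier n"
  then show "Phi n r (ext_add a b) = ext_add (Phi n r a) (Phi n r b)"
    "Phi n r (ext_mul a b) = ext_mul (Phi n r a) (Phi n r b)"
    using Phi_hom[OF R] by auto
next
  fix j assume j: "j \<in> {1..n}"
  show "pjr n j 0 = elem {1..<n} (n - j)" by (rule pjr_0[OF j])
  show "pjr n j (n - j) = (-1) ^ (n - j) * hcompl {n} (n - j)" by (simp add: pjr_top hcompl_single)
  show "pjr n j (n - j) = (-1) ^ (n - j) * X n ^ (n - j)" by (rule pjr_top)
qed


end
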